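(* Under the standing setup, there is a constant $c\ge0$ depending only on the symbol $f$ such that for every $k\in\{-q+1,\dots,p-1\}$ and every $n\ge1$, the polynomial $P_{k,n}(\lambda)=\det T_n\big(z^{-k}(f(z)-\lambda)\big)$ satisfies: (a) if $\lambda_1\in\mathbb C$, then $P_{k,n}$ is divisible by $(\lambda-\lambda_1)^{\lceil m_{1,k}n-c\rceil}$ (trivially if this exponent is $\le 0$); if $\lambda_1=\infty$, then $\deg P_{k,n}\le(1-m_{1,k})n+c$; (b) if $\lambda_2\in\mathbb C$, then $P_{k,n}$ is divisible by $(\lambda-\lambda_2)^{\lceil m_{2,k}n-c\rceil}$; if $\lambda_2=\infty$, then $\deg P_{k,n}\le(1-m_{2,k})n+c$; (c) if $Q_{k,n}$ denotes the polynomial obtained from $P_{k,n}$ by removing all its factors $(\lambda-\lambda_1)$ (if $\lambda_1\in\mathbb C$) and $(\lambda-\lambda_2)$ (if $\lambda_2\in\mathbb C$), then $\deg Q_{k,n}\le m_kn+2c$.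
   Context: Standing setup. Let $A,B_1,B_2$ be complex polynomials such that all roots of $B_1$ lie in $\{|z|<1\}$, all roots of $B_2$ lie in $\{|z|>1\}$, and $A$ has no common root with $B_1B_2$. Put $f(z)=A(z)/(B_1(z)B_2(z))$ for $|z|=1$, with Fourier coefficients $f_k=\frac1{2\pi}\int_0^{2\pi}f(e^{it})e^{-ikt}\,dt$; for an integrable function $g$ on the unit circle, $T_n(g)$ denotes the $n\times n$ Toeplitz matrix $(g_{i-j})_{i,j=1}^n$ where $g_m$ are the Fourier coefficients of $g$. Let $q=\deg B_1$ and $p=\max(\deg A,\deg(B_1B_2))-q$; assume $p,q\ge1$ and $\gcd\{k: f_k\ne0\}=1$. For $\lambda\in\mathbb C$ write $A_\lambda(z)=A(z)-\lambda B_1(z)B_2(z)=\sum_{k=-q}^{p}(a_k-\lambda b_k)z^{q+k}$. Define $\lambda_1,\lambda_2\in\mathbb C\cup\{\infty\}$ by $a_{-q}-b_{-q}\lambda_1=0$, $a_p-b_p\lambda_2=0$ (convention: $a_k-b_k\lambda=0$ when $b_k=0$, $\lambda=\infty$). Let $k_1\in\{1,\dots,p+q\}$ be maximal with $a_k-b_k\lambda_1=0$ for $k=-q,\dots,-q+k_1-1$, and $k_2\in\{1,\dots,p+q\}$ maximal with $a_k-b_k\lambda_2=0$ for $k=p-k_2+1,\dots,p$. Set $m_{1,k}=\max(1-\frac{q+k}{k_1},0)$, $m_{2,k}=\max(1-\frac{p-k}{k_2},0)$, $m_k=1-m_{1,k}-m_{2,k}$. *)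

theory Defs
  imports "HOL-Analysis.Analysis" "HOL-Computational_Algebra.Polynomial"
    "Jordan_Normal_Form.Determinant"
begin

definition fourier_coeff :: "(complex \<Rightarrow> complex) \<Rightarrow> int \<Rightarrow> complex" where
  "fourier_coeff g m =
     integral {0..2*pi} (\<lambda>t. g (cis t) * cis (- (of_int m * t))) / complex_of_real (2*pi)"

text \<open>n x n Toeplitz matrix (g_{i-j}); 0-based indices, which gives the same entries.\<close>
definition toeplitz :: "nat \<Rightarrow> (complex \<Rightarrow> complex) \<Rightarrow> complex mat" where
  "toeplitz n g = Matrix.mat n n (\<lambda>(i,j). fourier_coeff g (int i - int j))"

definition symb :: "complex poly \<Rightarrow> complex poly \<Rightarrow> complex poly \<Rightarrow> complex \<Rightarrow> complex" where
  "symb A B1 B2 z = poly A z / poly (B1 * B2) z"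

definition qq :: "complex poly \<Rightarrow> nat" where
  "qq B1 = degree B1"

definition pp :: "complex poly \<Rightarrow> complex poly \<Rightarrow> complex poly \<Rightarrow> nat" where
  "pp A B1 B2 = max (degree A) (degree (B1 * B2)) - degree B1"

text \<open>a_j and b_j for j in {-q..p}: A(z) = sum a_j z^{q+j}, B1B2(z) = sum b_j z^{q+j}.\<close>
definition ca :: "complex poly \<Rightarrow> complex poly \<Rightarrow> int \<Rightarrow> complex" where
  "ca A B1 j = coeff A (nat (int (degree B1) + j))"

definition cb :: "complex poly \<Rightarrow> complex poly \<Rightarrow> int \<Rightarrow> complex" where
  "cb B1 B2 j = coeff (B1 * B2) (nat (int (degree B1) + j))"

text \<open>a_j - b_j lambda = 0, with lambda in C \<union> {infinity} (None = infinity, meaning b_j = 0).\<close>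
definition vanish :: "complex poly \<Rightarrow> complex poly \<Rightarrow> complex poly \<Rightarrow> int \<Rightarrow> complex option \<Rightarrow> bool" where
  "vanish A B1 B2 j l = (case l of None \<Rightarrow> cb B1 B2 j = 0
                                  | Some \<mu> \<Rightarrow> ca A B1 j - cb B1 B2 j * \<mu> = 0)"

definition lam1 :: "complex poly \<Rightarrow> complex poly \<Rightarrow> complex poly \<Rightarrow> complex option" where
  "lam1 A B1 B2 = (let j = - int (qq B1) in
     if cb B1 B2 j = 0 then None else Some (ca A B1 j / cb B1 B2 j))"

definition lam2 :: "complex poly \<Rightarrow> complex poly \<Rightarrow> complex poly \<Rightarrow> complex option" where
  "lam2 A B1 B2 = (let j = int (pp A B1 B2) in
     if cb B1 B2 j = 0 then None else Some (ca A B1 j / cb B1 B2 j))"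

definition kk1 :: "complex poly \<Rightarrow> complex poly \<Rightarrow> complex poly \<Rightarrow> nat" where
  "kk1 A B1 B2 = Max {\<kappa> \<in> {1..pp A B1 B2 + qq B1}.
     \<forall>j \<in> {- int (qq B1) .. - int (qq B1) + int \<kappa> - 1}. vanish A B1 B2 j (lam1 A B1 B2)}"

definition kk2 :: "complex poly \<Rightarrow> complex poly \<Rightarrow> complex poly \<Rightarrow> nat" where
  "kk2 A B1 B2 = Max {\<kappa> \<in> {1..pp A B1 B2 + qq B1}.
     \<forall>j \<in> {int (pp A B1 B2) - int \<kappa> + 1 .. int (pp A B1 B2)}. vanish A B1 B2 j (lam2 A B1 B2)}"

definition m1 :: "complex poly \<Rightarrow> complex poly \<Rightarrow> complex poly \<Rightarrow> int \<Rightarrow> real" where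
  "m1 A B1 B2 k = max (1 - real_of_int (int (qq B1) + k) / real (kk1 A B1 B2)) 0"

definition m2 :: "complex poly \<Rightarrow> complex poly \<Rightarrow> complex poly \<Rightarrow> int \<Rightarrow> real" where
  "m2 A B1 B2 k = max (1 - real_of_int (int (pp A B1 B2) - k) / real (kk2 A B1 B2)) 0"

definition mm :: "complex poly \<Rightarrow> complex poly \<Rightarrow> complex poly \<Rightarrow> int \<Rightarrow> real" where
  "mm A B1 B2 k = 1 - m1 A B1 B2 k - m2 A B1 B2 k"

definition strip_root :: "complex option \<Rightarrow> complex poly \<Rightarrow> complex poly" where
  "strip_root l P = (case l of None \<Rightarrow> P | Some \<mu> \<Rightarrow> P div [:-\<mu>, 1:] ^ order \<mu> P)"

end

theory Submission
  imports Defs "HOL-Computational_Algebra.Fundamental_Theorem_Algebra"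
begin


lemma counting:
  fixes Dd :: "nat \<Rightarrow> int" and s \<kappa> C :: int
  assumes sum0: "(\<Sum>i<n. Dd i) = 0"
    and Xsub: "X \<subseteq> {..<n}" and Xcard: "card X \<le> e"
    and Xlow: "\<forall>i\<in>X. Dd i \<ge> - C" and C: "C \<ge> 0"
    and band: "\<forall>i<n. i \<notin> X \<longrightarrow> Dd i \<ge> - s"
    and kap: "\<kappa> > 0" and s0: "s \<ge> 0"
  shows "real (card {i. i < n \<and> i \<notin> X \<and> Dd i < \<kappa> - s}) \<ge>
           max (1 - real_of_int s / real_of_int \<kappa>) 0 * real n - real e * (1 + real_of_int C)"
proof -
  define Lo where "Lo = {i. i < n \<and> i \<notin> X \<and> Dd i < \<kappa> - s}"
  define R where "R = {i. i < n \<and> i \<notin> X \<and> \<not> Dd i < \<kappa> - s}"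
  have fin: "finite X" "finite Lo" "finite R" using Xsub finite_subset
    by (auto simp: Lo_def R_def)
  have un: "{..<n} = X \<union> (Lo \<union> R)" using Xsub by (auto simp: Lo_def R_def)
  have dis: "X \<inter> (Lo \<union> R) = {}" "Lo \<inter> R = {}" by (auto simp: Lo_def R_def)
  have cn: "n = card X + card Lo + card R"
  proof -
    have "n = card {..<n}" by simp
    also have "\<dots> = card X + card (Lo \<union> R)" unfolding un using fin dis by (simp add: card_Un_disjoint)
    also have "card (Lo \<union> R) = card Lo + card R" using fin dis by (simp add: card_Un_disjoint)
    finally show ?thesis by simp
  qed
  have "0 = (\<Sum>i\<in>X \<union> (Lo \<union> R). Dd i)" using sum0 un by simp
  also have "\<dots> = (\<Sum>i\<in>X. Dd i) + (\<Sum>i\<in>Lo. Dd i) + (\<Sum>i\<in>R. Dd i)"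
    using fin dis by (simp add: sum.union_disjoint)
  finally have S: "0 = (\<Sum>i\<in>X. Dd i) + (\<Sum>i\<in>Lo. Dd i) + (\<Sum>i\<in>R. Dd i)" .
  have s1: "(\<Sum>i\<in>X. Dd i) \<ge> (\<Sum>i\<in>X. - C)" using Xlow by (intro sum_mono) auto
  have s2: "(\<Sum>i\<in>Lo. Dd i) \<ge> (\<Sum>i\<in>Lo. - s)" using band by (intro sum_mono) (auto simp: Lo_def)
  have s3: "(\<Sum>i\<in>R. Dd i) \<ge> (\<Sum>i\<in>R. \<kappa> - s)" by (intro sum_mono) (auto simp: R_def)
  have key: "\<kappa> * int (card Lo) \<ge> (\<kappa> - s) * (int n - int (card X)) - C * int (card X)"
    using S s1 s2 s3 cn by (simp add: algebra_simps)
  let ?cL = "real (card Lo)" and ?cX = "real (card X)"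
  have key': "real_of_int \<kappa> * ?cL \<ge> (real_of_int \<kappa> - real_of_int s) * (real n - ?cX) - real_of_int C * ?cX"
    using key by (metis (mono_tags, opaque_lifting) of_int_le_iff of_int_mult of_int_diff of_int_of_nat_eq)
  have cXe: "?cX \<le> real e" using Xcard by simp
  have cXn: "?cX \<le> real n" using cn by simp
  show ?thesis
  proof (cases "s \<le> \<kappa>")
    case True
    define m where "m = 1 - real_of_int s / real_of_int \<kappa>"
    have m01: "0 \<le> m" "m \<le> 1" using True kap s0 by (auto simp: m_def field_simps)
    have mx: "max (1 - real_of_int s / real_of_int \<kappa>) 0 = m" using m01 by (simp add: m_def)
    have kr: "real_of_int \<kappa> \<ge> 1" using kap by simp
    have "?cL \<ge> m * (real n - ?cX) - real_of_int C * ?cX / real_of_int \<kappa>"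
    proof -
      have "?cL = (real_of_int \<kappa> * ?cL) / real_of_int \<kappa>" using kap by simp
      also have "\<dots> \<ge> ((real_of_int \<kappa> - real_of_int s) * (real n - ?cX) - real_of_int C * ?cX) / real_of_int \<kappa>"
        using key' kap by (intro divide_right_mono) auto
      also have "((real_of_int \<kappa> - real_of_int s) * (real n - ?cX) - real_of_int C * ?cX) / real_of_int \<kappa>
           = m * (real n - ?cX) - real_of_int C * ?cX / real_of_int \<kappa>"
      proof -
        have "(real_of_int \<kappa> - real_of_int s) / real_of_int \<kappa> = m"
          using kap by (simp add: m_def diff_divide_distrib)
        then show ?thesis by (metis diff_divide_distrib times_divide_eq_left)
      qed
      finally show ?thesis .
    qed
    moreover have "real_of_int C * ?cX / real_of_int \<kappa> \<le> real_of_int C * ?cX"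
    proof -
      have h: "?cX \<le> real_of_int \<kappa> * ?cX" using kr mult_right_mono[of 1 "real_of_int \<kappa>" ?cX] by simp
      have "real_of_int C * ?cX \<le> real_of_int C * (real_of_int \<kappa> * ?cX)"
        using mult_left_mono[OF h, of "real_of_int C"] C by simp
      then show ?thesis using kap by (simp add: field_simps)
    qed
    moreover have "m * ?cX \<le> ?cX" using m01 by (simp add: mult_left_le_one_le)
    moreover have "real_of_int C * ?cX \<le> real_of_int C * real e" using cXe C by (simp add: mult_left_mono)
    moreover have "m * (real n - ?cX) = m * real n - m * ?cX" by (simp add: algebra_simps)
    moreover have "real e * (1 + real_of_int C) = real e + real_of_int C * real e" by (simp add: algebra_simps)
    ultimately show ?thesis unfolding mx Lo_def[symmetric] using cXe by linarith
  next
    case False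
    then have "max (1 - real_of_int s / real_of_int \<kappa>) 0 = 0" using kap by (simp add: field_simps)
    moreover have "real e * (1 + real_of_int C) \<ge> 0" using C by simp
    ultimately show ?thesis by (simp add: Lo_def[symmetric])
  qed
qed

lemma perm_sum0:
  assumes "\<sigma> permutes {0..<n}"
  shows "(\<Sum>i<n. int i - int (\<sigma> i)) = 0"
proof -
  have "(\<Sum>i\<in>{0..<n}. int (\<sigma> i)) = (\<Sum>i\<in>{0..<n}. int i)"
    using sum.permute[OF assms, of int] by (simp add: comp_def)
  then show ?thesis by (simp add: sum_subtractf atLeast0LessThan)
qed

lemma perm_sum0':
  assumes "\<sigma> permutes {0..<n}"
  shows "(\<Sum>i<n. int (\<sigma> i) - int i) = 0"
proof -
  have "(\<Sum>i\<in>{0..<n}. int (\<sigma> i)) = (\<Sum>i\<in>{0..<n}. int i)"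
    using sum.permute[OF assms, of int] by (simp add: comp_def)
  then show ?thesis by (simp add: sum_subtractf atLeast0LessThan)
qed

lemma card_exc:
  fixes \<sigma> :: "nat \<Rightarrow> nat"
  assumes "\<sigma> permutes {0..<n}" "card {i. i < n \<and> R i} \<le> ea" "card {j. j < n \<and> Cc j} \<le> eb"
  shows "card {i. i < n \<and> (R i \<or> Cc (\<sigma> i))} \<le> ea + eb"
proof -
  have eq: "{i. i < n \<and> (R i \<or> Cc (\<sigma> i))} = {i. i < n \<and> R i} \<union> {i. i < n \<and> Cc (\<sigma> i)}" by blast
  have c1: "card ({i. i < n \<and> R i} \<union> {i. i < n \<and> Cc (\<sigma> i)}) \<le> card {i. i < n \<and> R i} + card {i. i < n \<and> Cc (\<sigma> i)}"
    by (rule card_Un_le)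
  have inj: "inj_on \<sigma> {i. i < n \<and> Cc (\<sigma> i)}"
    using permutes_inj[OF assms(1)] by (simp add: inj_on_def inj_def)
  have sub: "\<sigma> ` {i. i < n \<and> Cc (\<sigma> i)} \<subseteq> {j. j < n \<and> Cc j}"
  proof
    fix y assume "y \<in> \<sigma> ` {i. i < n \<and> Cc (\<sigma> i)}"
    then obtain i where "i < n" "Cc (\<sigma> i)" "y = \<sigma> i" by blast
    moreover have "\<sigma> i \<in> {0..<n}" using permutes_in_image[OF assms(1)] \<open>i < n\<close> by auto
    ultimately show "y \<in> {j. j < n \<and> Cc j}" by simp
  qed
  have c2: "card {i. i < n \<and> Cc (\<sigma> i)} \<le> card {j. j < n \<and> Cc j}"
    by (rule card_inj_on_le[OF inj sub]) simp
  show ?thesis unfolding eq using c1 c2 assms(2,3) by linarith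
qed

lemma perm_good:
  fixes E :: "nat \<Rightarrow> nat \<Rightarrow> 'a::{comm_ring_1}" and \<delta> :: "nat \<Rightarrow> nat \<Rightarrow> int" and s \<kappa> C :: int
  assumes \<sigma>: "\<sigma> permutes {0..<n}"
    and nz: "\<forall>i<n. E i (\<sigma> i) \<noteq> 0"
    and sum0: "(\<Sum>i<n. \<delta> i (\<sigma> i)) = 0"
    and cR: "card {i. i < n \<and> R i} \<le> ea" and cC: "card {j. j < n \<and> Cc j} \<le> eb"
    and exc: "\<forall>i<n. \<forall>j<n. (R i \<or> Cc j) \<longrightarrow> E i j \<noteq> 0 \<longrightarrow> \<delta> i j \<ge> - C"
    and bnd: "\<forall>i<n. \<forall>j<n. \<not> (R i \<or> Cc j) \<longrightarrow> E i j \<noteq> 0 \<longrightarrow> \<delta> i j \<ge> - s"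
    and good: "\<forall>i<n. \<forall>j<n. \<not> (R i \<or> Cc j) \<longrightarrow> \<delta> i j < \<kappa> - s \<longrightarrow> G (E i j)"
    and C: "C \<ge> 0" and kap: "\<kappa> > 0" and s0: "s \<ge> 0"
  shows "\<exists>Lo \<subseteq> {..<n}. real (card Lo) \<ge> max (1 - real_of_int s / real_of_int \<kappa>) 0 * real n - real (ea + eb) * (1 + real_of_int C)
            \<and> (\<forall>i\<in>Lo. G (E i (\<sigma> i)))"
proof -
  define X where "X = {i. i < n \<and> (R i \<or> Cc (\<sigma> i))}"
  have sig: "\<And>i. i < n \<Longrightarrow> \<sigma> i < n" using permutes_in_image[OF \<sigma>] by auto
  have cX: "card X \<le> ea + eb" unfolding X_def by (rule card_exc[OF \<sigma> cR cC])
  have "real (card {i. i < n \<and> i \<notin> X \<and> \<delta> i (\<sigma> i) < \<kappa> - s}) \<ge>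
           max (1 - real_of_int s / real_of_int \<kappa>) 0 * real n - real (ea + eb) * (1 + real_of_int C)"
  proof (rule counting[OF sum0 _ cX _ C _ kap s0])
    show "X \<subseteq> {..<n}" by (auto simp: X_def)
    show "\<forall>i\<in>X. - C \<le> \<delta> i (\<sigma> i)"
    proof
      fix i assume i: "i \<in> X"
      then have "i < n" "R i \<or> Cc (\<sigma> i)" by (auto simp: X_def)
      then show "- C \<le> \<delta> i (\<sigma> i)" using exc sig[OF \<open>i < n\<close>] nz by blast
    qed
    show "\<forall>i<n. i \<notin> X \<longrightarrow> - s \<le> \<delta> i (\<sigma> i)"
    proof (intro allI impI)
      fix i assume i: "i < n" "i \<notin> X"
      then have "\<not> (R i \<or> Cc (\<sigma> i))" by (auto simp: X_def)
      then show "- s \<le> \<delta> i (\<sigma> i)" using bnd sig[OF \<open>i < n\<close>] nz i(1) by blast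
    qed
  qed
  moreover have "\<forall>i\<in>{i. i < n \<and> i \<notin> X \<and> \<delta> i (\<sigma> i) < \<kappa> - s}. G (E i (\<sigma> i))"
  proof
    fix i assume i: "i \<in> {i. i < n \<and> i \<notin> X \<and> \<delta> i (\<sigma> i) < \<kappa> - s}"
    then have "i < n" "\<not> (R i \<or> Cc (\<sigma> i))" "\<delta> i (\<sigma> i) < \<kappa> - s" by (auto simp: X_def)
    then show "G (E i (\<sigma> i))" using good sig[OF \<open>i < n\<close>] by blast
  qed
  moreover have "{i. i < n \<and> i \<notin> X \<and> \<delta> i (\<sigma> i) < \<kappa> - s} \<subseteq> {..<n}" by auto
  ultimately show ?thesis by blast
qed

lemma prod_dvd_from_Lo:
  fixes E :: "nat \<Rightarrow> complex poly"
  assumes "Lo \<subseteq> {..<n}" "\<forall>i\<in>Lo. x dvd E i"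
  shows "x ^ card Lo dvd (\<Prod>i\<in>{0..<n}. E i)"
proof -
  have fin: "finite Lo" using assms(1) finite_subset by auto
  have "(\<Prod>i\<in>{0..<n}. E i) = (\<Prod>i\<in>Lo. E i) * (\<Prod>i\<in>{0..<n} - Lo. E i)"
    using assms(1) by (subst prod.subset_diff[of Lo]) (auto simp: atLeast0LessThan)
  moreover have "x ^ card Lo dvd (\<Prod>i\<in>Lo. E i)"
  proof -
    have "(\<Prod>i\<in>Lo. x) dvd (\<Prod>i\<in>Lo. E i)" using assms(2) by (intro prod_dvd_prod) auto
    then show ?thesis by simp
  qed
  ultimately show ?thesis by simp
qed

lemma prod_deg_from_Lo:
  fixes E :: "nat \<Rightarrow> complex poly"
  assumes "Lo \<subseteq> {..<n}" "\<forall>i\<in>Lo. degree (E i) = 0" "\<forall>i<n. degree (E i) \<le> 1"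
  shows "degree (\<Prod>i\<in>{0..<n}. E i) \<le> n - card Lo"
proof -
  have fin: "finite Lo" using assms(1) finite_subset by auto
  have "degree (\<Prod>i\<in>{0..<n}. E i) \<le> (\<Sum>i\<in>{0..<n}. degree (E i))"
    using degree_prod_sum_le[of "{0..<n}" E] by (simp add: comp_def)
  also have "\<dots> = (\<Sum>i\<in>Lo. degree (E i)) + (\<Sum>i\<in>{0..<n} - Lo. degree (E i))"
    using assms(1) by (subst sum.subset_diff[of Lo]) (auto simp: atLeast0LessThan)
  also have "\<dots> \<le> 0 + (\<Sum>i\<in>{0..<n} - Lo. 1)"
  proof -
    have a: "(\<Sum>i\<in>Lo. degree (E i)) = 0" using assms(2) by simp
    have b: "(\<Sum>i\<in>{0..<n}-Lo. degree (E i)) \<le> (\<Sum>i\<in>{0..<n}-Lo. 1)"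
      by (rule sum_mono) (use assms(3) in auto)
    show ?thesis using a b by simp
  qed
  also have "\<dots> = n - card Lo" using assms(1) fin by (simp add: card_Diff_subset atLeast0LessThan)
  finally show ?thesis .
qed

definition detp :: "nat \<Rightarrow> (nat \<Rightarrow> nat \<Rightarrow> complex poly) \<Rightarrow> complex poly" where
  "detp n E = (\<Sum>\<sigma>\<in>{\<sigma>. \<sigma> permutes {0..<n}}. of_int (sign \<sigma>) * (\<Prod>i\<in>{0..<n}. E i (\<sigma> i)))"

lemma detp_dvd:
  assumes "\<And>\<sigma>. \<sigma> permutes {0..<n} \<Longrightarrow> x dvd (\<Prod>i\<in>{0..<n}. E i (\<sigma> i))"
  shows "x dvd detp n E"
  unfolding detp_def using assms by (intro dvd_sum dvd_mult) auto

lemma detp_deg: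
  assumes "\<And>\<sigma>. \<sigma> permutes {0..<n} \<Longrightarrow> degree (\<Prod>i\<in>{0..<n}. E i (\<sigma> i)) \<le> D"
  shows "degree (detp n E) \<le> D"
  unfolding detp_def
proof (rule degree_sum_le)
  fix \<sigma> assume "\<sigma> \<in> {\<sigma>. \<sigma> permutes {0..<n}}"
  then have "degree (\<Prod>i\<in>{0..<n}. E i (\<sigma> i)) \<le> D" using assms by auto
  moreover have "degree (of_int (sign \<sigma>) * (\<Prod>i\<in>{0..<n}. E i (\<sigma> i)) :: complex poly) \<le> degree (\<Prod>i\<in>{0..<n}. E i (\<sigma> i))"
    using degree_mult_le[of "of_int (sign \<sigma>) :: complex poly"] by (simp add: degree_of_int)
  ultimately show "degree (of_int (sign \<sigma>) * (\<Prod>i\<in>{0..<n}. E i (\<sigma> i)) :: complex poly) \<le> D" by linarith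
qed (simp add: finite_permutations)

lemma poly_detp:
  assumes "M \<in> carrier_mat n n" "\<And>i j. i < n \<Longrightarrow> j < n \<Longrightarrow> poly (E i j) x = M $$ (i,j)"
  shows "poly (detp n E) x = det M"
proof -
  have "poly (detp n E) x = (\<Sum>\<sigma>\<in>{\<sigma>. \<sigma> permutes {0..<n}}. of_int (sign \<sigma>) * (\<Prod>i\<in>{0..<n}. poly (E i (\<sigma> i)) x))"
    unfolding detp_def by (simp add: poly_sum poly_prod)
  also have "\<dots> = (\<Sum>\<sigma>\<in>{\<sigma>. \<sigma> permutes {0..<n}}. of_int (sign \<sigma>) * (\<Prod>i\<in>{0..<n}. M $$ (i, \<sigma> i)))"
  proof (intro sum.cong refl arg_cong2[where f="(*)"] prod.cong)
    fix \<sigma> i assume "\<sigma> \<in> {\<sigma>. \<sigma> permutes {0..<n}}" "i \<in> {0..<n}"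
    then show "poly (E i (\<sigma> i)) x = M $$ (i, \<sigma> i)"
      using assms(2) permutes_in_image by fastforce
  qed
  also have "\<dots> = det M" by (rule det_def'[OF assms(1), symmetric])
  finally show ?thesis .
qed



definition CC :: "(complex \<Rightarrow> complex) \<Rightarrow> bool" where
  "CC g = continuous_on (sphere 0 1) g"

lemma CC_cis: "CC g \<Longrightarrow> continuous_on S (\<lambda>t. g (cis t))"
  unfolding CC_def
  by (rule continuous_on_compose2[where f=cis and g=g]) (auto intro: continuous_intros)

lemma FC_integrable:
  assumes "CC g"
  shows "(\<lambda>t. g (cis t) * cis (- (of_int m * t))) integrable_on {0..2*pi}"
  by (rule integrable_continuous_interval, intro continuous_intros CC_cis assms)

lemma FC_add:
  assumes "CC f" "CC g"
  shows "fourier_coeff (\<lambda>z. f z + g z) m = fourier_coeff f m + fourier_coeff g m"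
  unfolding fourier_coeff_def
  using integral_add[OF FC_integrable[OF assms(1)] FC_integrable[OF assms(2)], of m m]
  by (simp add: distrib_right add_divide_distrib)

lemma FC_cmult:
  shows "fourier_coeff (\<lambda>z. c * f z) m = c * fourier_coeff f m"
  unfolding fourier_coeff_def
  by (simp add: mult.assoc integral_mult_right)

lemma FC_sum:
  assumes "finite S" "\<And>i. i \<in> S \<Longrightarrow> CC (f i)"
  shows "fourier_coeff (\<lambda>z. \<Sum>i\<in>S. f i z) m = (\<Sum>i\<in>S. fourier_coeff (f i) m)"
  using assms
proof (induction S rule: finite_induct)
  case empty
  then show ?case by (simp add: fourier_coeff_def)
next
  case (insert x F)
  have "CC (\<lambda>z. \<Sum>i\<in>F. f i z)"
    using insert unfolding CC_def by (intro continuous_on_sum) auto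
  then show ?case using insert
    by (simp add: FC_add)
qed

lemma FC_shift:
  "fourier_coeff (\<lambda>z. z powi e * g z) m = fourier_coeff g (m - e)"
  unfolding fourier_coeff_def
proof -
  have "(\<lambda>t. cis t powi e * g (cis t) * cis (- (of_int m * t))) = (\<lambda>t. g (cis t) * cis (- (of_int (m - e) * t)))"
    by (rule ext) (simp add: cis_power_int cis_mult algebra_simps)
  then show "integral {0..2 * pi} (\<lambda>t. cis t powi e * g (cis t) * cis (- (of_int m * t))) / complex_of_real (2 * pi) =
    integral {0..2 * pi} (\<lambda>t. g (cis t) * cis (- (of_int (m - e) * t))) / complex_of_real (2 * pi)"
    by simp
qed

lemma FC_shift_nat:
  "fourier_coeff (\<lambda>z. z ^ l * g z) m = fourier_coeff g (m - int l)"
  using FC_shift[of "int l" g m] by (simp add: power_int_of_nat)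

lemma integral_cis_int:
  "integral {0..2*pi} (\<lambda>t. cis (of_int j * t)) = (if j = 0 then complex_of_real (2*pi) else 0)"
proof (cases "j = 0")
  case True
  then show ?thesis by (simp add: scaleR_conv_of_real)
next
  case False
  have "integral {0..2*pi} (\<lambda>t. exp ((\<i> * of_int j) * complex_of_real t)) =
     (exp ((\<i> * of_int j) * of_real (2*pi)) - 1) / (\<i> * of_int j)"
    by (rule integral_exp) (use False in auto)
  also have "exp ((\<i> * of_int j) * of_real (2*pi)) = 1"
  proof -
    have "exp ((\<i> * of_int j) * of_real (2*pi)) = cis (of_int j * (2*pi))"
      by (simp add: cis_conv_exp algebra_simps)
    also have "\<dots> = 1"
      using cis_multiple_2pi[of "of_int j"] by (simp add: mult.commute)
    finally show ?thesis .
  qed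
  finally show ?thesis using False
    by (simp add: cis_conv_exp algebra_simps)
qed

lemma FC_powi: "fourier_coeff (\<lambda>z. z powi e) m = (if m = e then 1 else 0)"
proof -
  have "fourier_coeff (\<lambda>z. z powi e) m = fourier_coeff (\<lambda>z. z powi e * 1) m" by simp
  also have "\<dots> = fourier_coeff (\<lambda>z. 1) (m - e)" by (rule FC_shift)
  also have "\<dots> = integral {0..2*pi} (\<lambda>t. cis (of_int (e - m) * t)) / complex_of_real (2*pi)"
    unfolding fourier_coeff_def by (simp add: algebra_simps)
  also have "\<dots> = (if m = e then 1 else 0)"
    using integral_cis_int[of "e - m"] by auto
  finally show ?thesis .
qed

lemma FC_bound:
  assumes "CC g"
  shows "\<exists>K. \<forall>m. norm (fourier_coeff g m) \<le> K"
proof -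
  let ?K = "integral {0..2*pi} (\<lambda>t. norm (g (cis t))) / (2*pi)"
  have "norm (fourier_coeff g m) \<le> ?K" for m
  proof -
    have "norm (integral {0..2*pi} (\<lambda>t. g (cis t) * cis (- (of_int m * t))))
        \<le> integral {0..2*pi} (\<lambda>t. norm (g (cis t)))"
      by (rule integral_norm_bound_integral)
        (auto intro!: FC_integrable assms integrable_continuous_interval continuous_intros CC_cis simp: norm_mult)
    then show ?thesis unfolding fourier_coeff_def
      by (simp add: norm_divide divide_right_mono)
  qed
  then show ?thesis by blast
qed

lemma CC_mult: "CC f \<Longrightarrow> CC g \<Longrightarrow> CC (\<lambda>z. f z * g z)"
  unfolding CC_def by (intro continuous_intros)

lemma CC_poly: "CC (\<lambda>z. poly p z)"
  unfolding CC_def by (intro continuous_intros)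

lemma CC_powi: "CC (\<lambda>z. z powi e)"
  unfolding CC_def by (intro continuous_intros) auto

lemma FC_poly_mult:
  assumes "CC g"
  shows "fourier_coeff (\<lambda>z. poly B z * g z) m = (\<Sum>l\<le>degree B. coeff B l * fourier_coeff g (m - int l))"
proof -
  have "(\<lambda>z. poly B z * g z) = (\<lambda>z. \<Sum>l\<le>degree B. coeff B l * (z powi int l * g z))"
    by (rule ext) (simp add: poly_altdef sum_distrib_right mult.assoc power_int_of_nat)
  then have "fourier_coeff (\<lambda>z. poly B z * g z) m = fourier_coeff (\<lambda>z. \<Sum>l\<le>degree B. coeff B l * (z powi int l * g z)) m"
    by simp
  also have "\<dots> = (\<Sum>l\<le>degree B. fourier_coeff (\<lambda>z. coeff B l * (z powi int l * g z)) m)"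
    using assms unfolding CC_def by (intro FC_sum) (auto simp: CC_def intro!: continuous_intros)
  also have "\<dots> = (\<Sum>l\<le>degree B. coeff B l * fourier_coeff g (m - int l))"
    by (simp add: FC_cmult FC_shift_nat)
  finally show ?thesis .
qed

lemma FC_lin_factor:
  assumes "CC u"
  shows "fourier_coeff (\<lambda>z. (z - r) * u z) m = fourier_coeff u (m - 1) - r * fourier_coeff u m"
proof -
  have "fourier_coeff (\<lambda>z. (z - r) * u z) m = fourier_coeff (\<lambda>z. poly [:-r, 1:] z * u z) m"
    by simp
  also have "\<dots> = fourier_coeff u (m - 1) - r * fourier_coeff u m"
    by (subst FC_poly_mult[OF assms]) auto
  finally show ?thesis .
qed

lemma FC_div_out:
  assumes u: "CC u" and r: "norm r > 1"
    and h: "\<forall>m<M. fourier_coeff (\<lambda>z. (z - r) * u z) m = 0"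
  shows "\<forall>m<M. fourier_coeff u m = 0"
proof (intro allI impI)
  fix B assume B: "B < M"
  obtain K where K: "\<And>m. norm (fourier_coeff u m) \<le> K" using FC_bound[OF u] by blast
  have rec: "fourier_coeff u (m - 1) = r * fourier_coeff u m" if "m < M" for m
    using h that FC_lin_factor[OF u, of r m] by auto
  have pw: "fourier_coeff u (B - int j) = r ^ j * fourier_coeff u B" for j
  proof (induction j)
    case 0 then show ?case by simp
  next
    case (Suc j)
    have "fourier_coeff u (B - int (Suc j)) = fourier_coeff u ((B - int j) - 1)" by (simp add: algebra_simps)
    also have "\<dots> = r * fourier_coeff u (B - int j)" by (rule rec) (use B in auto)
    finally show ?case using Suc by simp
  qed
  show "fourier_coeff u B = 0"
  proof (rule ccontr)
    assume nz: "fourier_coeff u B \<noteq> 0"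
    then have pos: "norm (fourier_coeff u B) > 0" by simp
    obtain j where j: "K / norm (fourier_coeff u B) < norm r ^ j"
      using real_arch_pow[OF r] by blast
    have "K < norm r ^ j * norm (fourier_coeff u B)"
      using j pos by (simp add: field_simps)
    also have "\<dots> = norm (fourier_coeff u (B - int j))"
      by (simp add: pw norm_mult norm_power)
    also have "\<dots> \<le> K" by (rule K)
    finally show False by simp
  qed
qed

lemma FC_div_in:
  assumes u: "CC u" and r: "norm r < 1"
    and h: "\<forall>m>M. fourier_coeff (\<lambda>z. (z - r) * u z) m = 0"
  shows "\<forall>m\<ge>M. fourier_coeff u m = 0"
proof (intro allI impI)
  fix B assume B: "B \<ge> M"
  obtain K where K: "\<And>m. norm (fourier_coeff u m) \<le> K" using FC_bound[OF u] by blast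
  have rec: "fourier_coeff u (m - 1) = r * fourier_coeff u m" if "m > M" for m
    using h that FC_lin_factor[OF u, of r m] by auto
  have pw: "fourier_coeff u B = r ^ j * fourier_coeff u (B + int j)" for j
  proof (induction j)
    case 0 then show ?case by simp
  next
    case (Suc j)
    have "fourier_coeff u (B + int j) = fourier_coeff u ((B + int (Suc j)) - 1)" by (simp add: algebra_simps)
    also have "\<dots> = r * fourier_coeff u (B + int (Suc j))" by (rule rec) (use B in auto)
    finally show ?case using Suc by simp
  qed
  show "fourier_coeff u B = 0"
  proof (rule ccontr)
    assume nz: "fourier_coeff u B \<noteq> 0"
    then have pos: "norm (fourier_coeff u B) > 0" by simp
    have K0: "K > 0" using K[of B] pos by linarith
    obtain j where j: "norm r ^ j < norm (fourier_coeff u B) / K"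
      using real_arch_pow_inv[of "norm (fourier_coeff u B) / K" "norm r"] pos K0 r by auto
    have "norm (fourier_coeff u B) = norm r ^ j * norm (fourier_coeff u (B + int j))"
      by (subst pw[of j]) (simp add: norm_mult norm_power)
    also have "\<dots> \<le> norm r ^ j * K" by (rule mult_left_mono[OF K]) simp
    also have "\<dots> < norm (fourier_coeff u B)" using j K0 by (simp add: field_simps)
    finally show False by simp
  qed
qed

lemma exists_root: "degree (B::complex poly) > 0 \<Longrightarrow> \<exists>z. poly B z = 0"
  using fundamental_theorem_of_algebra constant_degree by (metis less_irrefl)

lemma split_root:
  assumes "poly (B::complex poly) r = 0" "B \<noteq> 0"
  obtains B' where "B = [:-r,1:] * B'" "degree B' < degree B" "B' \<noteq> 0"
proof -
  obtain B' where B': "B = [:-r,1:] * B'" using assms poly_eq_0_iff_dvd by (metis dvdE)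
  then have "B' \<noteq> 0" using assms by auto
  have "degree ([:-r,1:] * B') = degree [:-r,1:] + degree B'"
    by (rule degree_mult_eq) (use \<open>B' \<noteq> 0\<close> in auto)
  then have "degree B = 1 + degree B'" using B' by simp
  then show ?thesis using that B' \<open>B' \<noteq> 0\<close> by simp
qed

lemma FC_div_out_poly:
  assumes "B \<noteq> 0" "\<forall>z. poly B z = 0 \<longrightarrow> norm z > 1" "CC u"
    "\<forall>m<M. fourier_coeff (\<lambda>z. poly B z * u z) m = 0"
  shows "\<forall>m<M. fourier_coeff u m = 0"
  using assms
proof (induction "degree B" arbitrary: B u rule: less_induct)
  case less
  show ?case
  proof (cases "degree B = 0")
    case True
    then obtain c where c: "B = [:c:]" by (metis degree_eq_zeroE)
    then have "c \<noteq> 0" using less by auto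
    then show ?thesis using less(5) c by (simp add: FC_cmult)
  next
    case False
    then obtain r where r: "poly B r = 0" using exists_root by auto
    obtain B' where B': "B = [:-r,1:] * B'" "degree B' < degree B" "B' \<noteq> 0"
      using split_root[OF r less(2)] by blast
    have nr: "norm r > 1" using less(3) r by auto
    have cc: "CC (\<lambda>z. poly B' z * u z)" by (intro CC_mult CC_poly less(4))
    have eq: "(\<lambda>z. poly B z * u z) = (\<lambda>z. (z - r) * (poly B' z * u z))"
      by (rule ext) (simp add: B'(1) algebra_simps)
    have "\<forall>m<M. fourier_coeff (\<lambda>z. poly B' z * u z) m = 0"
      by (rule FC_div_out[OF cc nr]) (use less(5) eq in auto)
    then show ?thesis
      by (intro less(1)[OF B'(2) B'(3) _ less(4)]) (use less(3) B'(1) in auto)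
  qed
qed

lemma FC_div_in_poly:
  assumes "B \<noteq> 0" "\<forall>z. poly B z = 0 \<longrightarrow> norm z < 1" "CC u"
    "\<forall>m>M. fourier_coeff (\<lambda>z. poly B z * u z) m = 0"
  shows "\<forall>m>M - int (degree B). fourier_coeff u m = 0"
  using assms
proof (induction "degree B" arbitrary: B u M rule: less_induct)
  case less
  show ?case
  proof (cases "degree B = 0")
    case True
    then obtain c where c: "B = [:c:]" by (metis degree_eq_zeroE)
    then have "c \<noteq> 0" using less by auto
    then show ?thesis using less(5) c True by (simp add: FC_cmult)
  next
    case False
    then obtain r where r: "poly B r = 0" using exists_root by auto
    obtain B' where B': "B = [:-r,1:] * B'" "degree B' < degree B" "B' \<noteq> 0"
      using split_root[OF r less(2)] by blast
    have "degree ([:-r,1:] * B') = degree [:-r,1:] + degree B'"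
      by (rule degree_mult_eq) (use B' in auto)
    then have dB: "degree B = 1 + degree B'" using B' by simp
    have nr: "norm r < 1" using less(3) r by auto
    have cc: "CC (\<lambda>z. poly B' z * u z)" by (intro CC_mult CC_poly less(4))
    have eq: "(\<lambda>z. poly B z * u z) = (\<lambda>z. (z - r) * (poly B' z * u z))"
      by (rule ext) (simp add: B'(1) algebra_simps)
    have "\<forall>m\<ge>M. fourier_coeff (\<lambda>z. poly B' z * u z) m = 0"
      by (rule FC_div_in[OF cc nr]) (use less(5) eq in auto)
    then have "\<forall>m>M - 1. fourier_coeff (\<lambda>z. poly B' z * u z) m = 0" by auto
    from less(1)[OF B'(2) B'(3) _ less(4) this] less(3) B'(1)
    have "\<forall>m>M - 1 - int (degree B'). fourier_coeff u m = 0" by auto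
    then show ?thesis using dB by auto
  qed
qed

lemma FC_cong:
  assumes "\<And>z. norm z = 1 \<Longrightarrow> f z = g z"
  shows "fourier_coeff f m = fourier_coeff g m"
proof -
  have "(\<lambda>t. f (cis t) * cis (- (of_int m * t))) = (\<lambda>t. g (cis t) * cis (- (of_int m * t)))"
    by (rule ext) (simp add: assms)
  then show ?thesis unfolding fourier_coeff_def by simp
qed

lemma FC_poly:
  "fourier_coeff (\<lambda>z. poly L z) m = (if 0 \<le> m then coeff L (nat m) else 0)"
proof -
  have c1: "CC (\<lambda>z. z powi 0)" by (rule CC_powi)
  have "fourier_coeff (\<lambda>z. poly L z) m = fourier_coeff (\<lambda>z. poly L z * z powi 0) m" by simp
  also have "\<dots> = (\<Sum>l\<le>degree L. coeff L l * (if m - int l = 0 then 1 else 0))"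
    using FC_powi[of 0] by (subst FC_poly_mult[OF c1]) simp
  also have "\<dots> = (if 0 \<le> m then coeff L (nat m) else 0)"
  proof (cases "0 \<le> m")
    case True
    have "(\<Sum>l\<le>degree L. coeff L l * (if m - int l = 0 then 1 else 0)) =
          (\<Sum>l\<le>degree L. if l = nat m then coeff L l else 0)"
      by (intro sum.cong refl) (use True in auto)
    also have "\<dots> = (if nat m \<in> {..degree L} then coeff L (nat m) else 0)"
      by (simp add: sum.delta)
    finally show ?thesis using True by (auto simp: coeff_eq_0)
  next
    case False
    then show ?thesis by (auto intro!: sum.neutral)
  qed
  finally show ?thesis .
qed

lemma FC_laurent:
  "fourier_coeff (\<lambda>z. z powi e * poly L z) m = (if 0 \<le> m - e then coeff L (nat (m - e)) else 0)"
  by (simp add: FC_shift FC_poly)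

lemma sum_window:
  fixes F :: "nat \<Rightarrow> 'a::comm_monoid_add"
  assumes "a + c < n" "\<And>r. r < n \<Longrightarrow> r < a \<or> a + c < r \<Longrightarrow> F r = 0"
  shows "(\<Sum>r<n. F r) = (\<Sum>t\<le>c. F (a + t))"
proof -
  have "(\<Sum>r<n. F r) = (\<Sum>r\<in>{a..a+c}. F r)"
    by (rule sum.mono_neutral_right) (use assms in auto)
  also have "{a..a+c} = (\<lambda>t. a + t) ` {..c}"
    using image_add_atLeastAtMost[of a 0 c] by (simp add: atLeast0AtMost add.commute)
  also have "(\<Sum>r\<in>(\<lambda>t. a + t) ` {..c}. F r) = (\<Sum>t\<le>c. F (a + t))"
    by (rule sum.reindex_cong[where l="\<lambda>t. a + t"]) (auto simp: inj_on_def)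
  finally show ?thesis .
qed

lemma sum_atMost_rev:
  fixes F :: "nat \<Rightarrow> 'a::comm_monoid_add"
  shows "(\<Sum>t\<le>c. F t) = (\<Sum>t\<le>c. F (c - t))"
  using sum.atLeastAtMost_rev[of F 0 c] by (simp add: atLeast0AtMost)

locale TS =
  fixes A B1 B2 :: "complex poly"
  assumes B1_roots: "\<forall>z. poly B1 z = 0 \<longrightarrow> norm z < 1"
    and B2_roots: "\<forall>z. poly B2 z = 0 \<longrightarrow> norm z > 1"
    and coprime_roots: "\<forall>z. poly A z = 0 \<longrightarrow> poly (B1 * B2) z \<noteq> 0"
    and q_pos: "qq B1 \<ge> 1"
    and p_pos: "pp A B1 B2 \<ge> 1"
begin

abbreviation "q \<equiv> degree B1"
abbreviation "d \<equiv> degree B2"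
abbreviation "p \<equiv> pp A B1 B2"

definition hf :: "complex \<Rightarrow> int \<Rightarrow> complex \<Rightarrow> complex" where
  "hf lam k = (\<lambda>z. z powi (- k) * (symb A B1 B2 z - lam))"

definition Lp :: "complex \<Rightarrow> complex poly" where
  "Lp lam = A - Polynomial.smult lam (B1 * B2)"

definition band :: "complex \<Rightarrow> int \<Rightarrow> int \<Rightarrow> complex" where
  "band lam k m = (if 0 \<le> m + k + int q then coeff (Lp lam) (nat (m + k + int q)) else 0)"

lemma B1_nz: "B1 \<noteq> 0"
proof
  assume "B1 = 0" then have "poly B1 2 = 0" by simp
  then show False using B1_roots by fastforce
qed

lemma B2_nz: "B2 \<noteq> 0"
proof
  assume "B2 = 0" then have "poly B2 0 = 0" by simp
  then show False using B2_roots by fastforce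
qed

lemma B2_0: "coeff B2 0 \<noteq> 0"
  using B2_roots by (auto simp: poly_0_coeff_0[symmetric])

lemma lcB1: "coeff B1 q \<noteq> 0"
  using B1_nz by simp

lemma circle_nz: "norm z = 1 \<Longrightarrow> poly B1 z \<noteq> 0 \<and> poly B2 z \<noteq> 0"
  using B1_roots B2_roots by fastforce

lemma degAB: "degree A \<le> p + q" "degree (B1 * B2) \<le> p + q" "degree (B1 * B2) = q + d"
proof -
  show 3: "degree (B1 * B2) = q + d" using B1_nz B2_nz by (simp add: degree_mult_eq)
  show "degree A \<le> p + q" "degree (B1 * B2) \<le> p + q"
    unfolding pp_def using 3 by auto
qed

lemma CC_hf: "CC (hf lam k)"
  unfolding CC_def hf_def symb_def
  using circle_nz by (intro continuous_intros) auto

lemma hf_lin: "fourier_coeff (hf lam k) m = fourier_coeff (hf 0 k) m - lam * (if m = - k then 1 else 0)"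
proof -
  have "fourier_coeff (hf lam k) m = fourier_coeff (\<lambda>z. hf 0 k z + (- lam) * z powi (-k)) m"
    unfolding hf_def by (simp add: algebra_simps)
  also have "\<dots> = fourier_coeff (hf 0 k) m + (- lam) * fourier_coeff (\<lambda>z. z powi (-k)) m"
  proof -
    have c: "CC (\<lambda>z. (- lam) * z powi (-k))" by (intro CC_mult CC_powi) (simp add: CC_def)
    show ?thesis using FC_add[OF CC_hf c, of 0 k m] FC_cmult[of "- lam" "\<lambda>z. z powi (-k)" m] by simp
  qed
  finally show ?thesis by (simp add: FC_powi)
qed

lemma laurent1:
  assumes "norm z = 1"
  shows "poly B2 z * (hf lam k z * (z powi (- int q) * poly B1 z)) = z powi (- (k + int q)) * poly (Lp lam) z"
proof -
  have z: "z \<noteq> 0" using assms by auto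
  have nz: "poly B1 z \<noteq> 0" "poly B2 z \<noteq> 0" using circle_nz[OF assms] by auto
  have "z powi (- (k + int q)) = z powi (- k) * z powi (- int q)"
    using z by (simp add: power_int_add[symmetric] del: power_int_minus)
  then show ?thesis
    unfolding hf_def symb_def Lp_def using nz
    by (simp add: field_simps del: power_int_minus)
qed

lemma laurent2:
  assumes "norm z = 1"
  shows "poly B1 z * (hf lam k z * poly B2 z) = z powi (- k) * poly (Lp lam) z"
proof -
  have nz: "poly B1 z \<noteq> 0" "poly B2 z \<noteq> 0" using circle_nz[OF assms] by auto
  then show ?thesis
    unfolding hf_def symb_def Lp_def
    by (simp add: field_simps del: power_int_minus)
qed

definition w1 :: "complex \<Rightarrow> int \<Rightarrow> int \<Rightarrow> complex" where
  "w1 lam k m = fourier_coeff (\<lambda>z. hf lam k z * (z powi (- int q) * poly B1 z)) m"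

definition w2 :: "complex \<Rightarrow> int \<Rightarrow> int \<Rightarrow> complex" where
  "w2 lam k m = fourier_coeff (\<lambda>z. hf lam k z * poly B2 z) m"

lemma CC_u1: "CC (\<lambda>z. hf lam k z * (z powi (- int q) * poly B1 z))"
  by (intro CC_mult CC_hf CC_powi CC_poly)

lemma CC_u2: "CC (\<lambda>z. hf lam k z * poly B2 z)"
  by (intro CC_mult CC_hf CC_poly)

lemma w1_sum: "w1 lam k m = (\<Sum>t\<le>q. coeff B1 t * fourier_coeff (hf lam k) (m + int q - int t))"
proof -
  have "(\<lambda>z. hf lam k z * (z powi (- int q) * poly B1 z)) = (\<lambda>z. z powi (- int q) * (poly B1 z * hf lam k z))"
    by (rule ext) (simp add: algebra_simps)
  then have "w1 lam k m = fourier_coeff (\<lambda>z. poly B1 z * hf lam k z) (m + int q)"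
    unfolding w1_def by (simp add: FC_shift)
  also have "\<dots> = (\<Sum>t\<le>q. coeff B1 t * fourier_coeff (hf lam k) (m + int q - int t))"
    by (rule FC_poly_mult[OF CC_hf])
  finally show ?thesis .
qed

lemma w1_zero: "m < - (k + int q) \<Longrightarrow> w1 lam k m = 0"
proof -
  assume m: "m < - (k + int q)"
  have "\<forall>m < - (k + int q). fourier_coeff (\<lambda>z. poly B2 z * (hf lam k z * (z powi (- int q) * poly B1 z))) m = 0"
  proof (intro allI impI)
    fix m :: int assume "m < - (k + int q)"
    have "fourier_coeff (\<lambda>z. poly B2 z * (hf lam k z * (z powi (- int q) * poly B1 z))) m =
      fourier_coeff (\<lambda>z. z powi (- (k + int q)) * poly (Lp lam) z) m"
      by (rule FC_cong) (simp add: laurent1)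
    then show "fourier_coeff (\<lambda>z. poly B2 z * (hf lam k z * (z powi (- int q) * poly B1 z))) m = 0"
      using \<open>m < - (k + int q)\<close> by (simp add: FC_laurent del: power_int_minus)
  qed
  from FC_div_out_poly[OF B2_nz B2_roots CC_u1 this] m show ?thesis
    unfolding w1_def by blast
qed

lemma w1_band: "(\<Sum>t\<le>d. coeff B2 t * w1 lam k (m - int t)) = band lam k m"
proof -
  have "(\<Sum>t\<le>d. coeff B2 t * w1 lam k (m - int t)) =
     fourier_coeff (\<lambda>z. poly B2 z * (hf lam k z * (z powi (- int q) * poly B1 z))) m"
    unfolding w1_def by (rule FC_poly_mult[OF CC_u1, symmetric])
  also have "\<dots> = fourier_coeff (\<lambda>z. z powi (- (k + int q)) * poly (Lp lam) z) m"
    by (rule FC_cong[OF laurent1])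
  also have "\<dots> = fourier_coeff (\<lambda>z. poly (Lp lam) z) (m + k + int q)"
    by (subst FC_shift) (simp add: algebra_simps)
  also have "\<dots> = band lam k m"
    by (simp add: FC_poly band_def)
  finally show ?thesis .
qed

lemma w2_sum: "w2 lam k m = (\<Sum>t\<le>d. coeff B2 t * fourier_coeff (hf lam k) (m - int t))"
proof -
  have "(\<lambda>z. hf lam k z * poly B2 z) = (\<lambda>z. poly B2 z * hf lam k z)"
    by (rule ext) (simp add: algebra_simps)
  then show ?thesis unfolding w2_def using FC_poly_mult[OF CC_hf] by simp
qed

lemma degLp: "degree (Lp lam) \<le> p + q"
proof -
  have "degree (Lp lam) \<le> max (degree A) (degree (Polynomial.smult lam (B1 * B2)))"
    unfolding Lp_def by (rule degree_diff_le_max)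
  also have "\<dots> \<le> p + q" using degAB degree_smult_le[of lam "B1 * B2"] by auto
  finally show ?thesis .
qed

lemma w2_zero: "m > int p - k \<Longrightarrow> w2 lam k m = 0"
proof -
  assume m: "m > int p - k"
  have "\<forall>m>int p + int q - k. fourier_coeff (\<lambda>z. poly B1 z * (hf lam k z * poly B2 z)) m = 0"
  proof (intro allI impI)
    fix m :: int assume mm: "m > int p + int q - k"
    have "nat (m + k) > p + q" using mm by auto
    then have "coeff (Lp lam) (nat (m + k)) = 0" by (intro coeff_eq_0) (use degLp[of lam] in linarith)
    moreover have "fourier_coeff (\<lambda>z. poly B1 z * (hf lam k z * poly B2 z)) m =
      fourier_coeff (\<lambda>z. z powi (- k) * poly (Lp lam) z) m"
      by (rule FC_cong) (simp add: laurent2)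
    ultimately show "fourier_coeff (\<lambda>z. poly B1 z * (hf lam k z * poly B2 z)) m = 0"
      using mm by (simp add: FC_laurent del: power_int_minus)
  qed
  from FC_div_in_poly[OF B1_nz B1_roots CC_u2 this] m show ?thesis
    unfolding w2_def by auto
qed

lemma w2_band: "(\<Sum>t\<le>q. coeff B1 t * w2 lam k (m + int q - int t)) = band lam k m"
proof -
  have "(\<Sum>t\<le>q. coeff B1 t * w2 lam k (m + int q - int t)) =
     fourier_coeff (\<lambda>z. poly B1 z * (hf lam k z * poly B2 z)) (m + int q)"
    unfolding w2_def by (rule FC_poly_mult[OF CC_u2, symmetric])
  also have "\<dots> = fourier_coeff (\<lambda>z. z powi (- int q) * (poly B1 z * (hf lam k z * poly B2 z))) m"
    by (simp add: FC_shift)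
  also have "\<dots> = fourier_coeff (\<lambda>z. z powi (- int q) * (z powi (- k) * poly (Lp lam) z)) m"
    by (rule FC_cong) (simp add: laurent2)
  also have "\<dots> = fourier_coeff (\<lambda>z. z powi (- (k + int q)) * poly (Lp lam) z) m"
  proof (rule FC_cong)
    fix z :: complex assume "norm z = 1"
    then have "z \<noteq> 0" by auto
    then have "z powi (- k + - int q) = z powi (- k) * z powi (- int q)"
      by (rule power_int_add[OF disjI1])
    then show "z powi (- int q) * (z powi (- k) * poly (Lp lam) z) = z powi (- (k + int q)) * poly (Lp lam) z"
      by (simp add: algebra_simps del: power_int_minus)
  qed
  also have "\<dots> = fourier_coeff (\<lambda>z. poly (Lp lam) z) (m + k + int q)"
    by (subst FC_shift) (simp add: algebra_simps)
  also have "\<dots> = band lam k m"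
    by (simp add: FC_poly band_def)
  finally show ?thesis .
qed

definition tlo :: "nat \<Rightarrow> nat \<Rightarrow> complex" where
  "tlo i l = (if l \<le> i then coeff B2 (i - l) else 0)"
definition tu :: "nat \<Rightarrow> nat \<Rightarrow> complex" where
  "tu r j = (if j \<le> r + q then coeff B1 (r + q - j) else 0)"
definition TL :: "nat \<Rightarrow> complex mat" where
  "TL n = mat n n (\<lambda>(i,j). tlo i j)"
definition TU :: "nat \<Rightarrow> complex mat" where
  "TU n = mat n n (\<lambda>(i,j). tu i j)"
definition Hm :: "nat \<Rightarrow> complex \<Rightarrow> int \<Rightarrow> complex mat" where
  "Hm n lam k = toeplitz n (hf lam k)"
definition Ma :: "nat \<Rightarrow> complex \<Rightarrow> int \<Rightarrow> complex mat" where
  "Ma n lam k = TL n * Hm n lam k * TU n"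
definition Mb :: "nat \<Rightarrow> complex \<Rightarrow> int \<Rightarrow> complex mat" where
  "Mb n lam k = TU n * Hm n lam k * TL n"

lemma carriers: "TL n \<in> carrier_mat n n" "TU n \<in> carrier_mat n n" "Hm n lam k \<in> carrier_mat n n"
  by (auto simp: TL_def TU_def Hm_def toeplitz_def)

lemma mult_entry:
  fixes X Y :: "complex mat"
  assumes "X \<in> carrier_mat n n" "Y \<in> carrier_mat n n" "i < n" "j < n"
  shows "(X * Y) $$ (i,j) = (\<Sum>l<n. X $$ (i,l) * Y $$ (l,j))"
  using assms by (simp add: scalar_prod_def atLeast0LessThan)

lemma Ma_entry:
  assumes "i < n" "j < n"
  shows "Ma n lam k $$ (i,j) = (\<Sum>l<n. tlo i l * (\<Sum>r<n. fourier_coeff (hf lam k) (int l - int r) * tu r j))"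
proof -
  have "Ma n lam k = TL n * (Hm n lam k * TU n)"
    unfolding Ma_def using carriers by (simp add: assoc_mult_mat[of _ n n _ n _ n])
  also have "\<dots> $$ (i,j) = (\<Sum>l<n. TL n $$ (i,l) * (Hm n lam k * TU n) $$ (l,j))"
    by (rule mult_entry[of _ n]) (use assms carriers in \<open>auto intro: mult_carrier_mat[of _ n n _ n]\<close>)
  also have "\<dots> = (\<Sum>l<n. TL n $$ (i,l) * (\<Sum>r<n. Hm n lam k $$ (l,r) * TU n $$ (r,j)))"
    by (intro sum.cong refl arg_cong2[where f="(*)"] mult_entry[of _ n]) (use assms carriers in auto)
  also have "\<dots> = (\<Sum>l<n. tlo i l * (\<Sum>r<n. fourier_coeff (hf lam k) (int l - int r) * tu r j))"
    using assms by (intro sum.cong refl) (auto simp: TL_def TU_def Hm_def toeplitz_def)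
  finally show ?thesis .
qed

lemma Mb_entry:
  assumes "i < n" "j < n"
  shows "Mb n lam k $$ (i,j) = (\<Sum>l<n. tu i l * (\<Sum>r<n. fourier_coeff (hf lam k) (int l - int r) * tlo r j))"
proof -
  have "Mb n lam k = TU n * (Hm n lam k * TL n)"
    unfolding Mb_def using carriers by (simp add: assoc_mult_mat[of _ n n _ n _ n])
  also have "\<dots> $$ (i,j) = (\<Sum>l<n. TU n $$ (i,l) * (Hm n lam k * TL n) $$ (l,j))"
    by (rule mult_entry[of _ n]) (use assms carriers in \<open>auto intro: mult_carrier_mat[of _ n n _ n]\<close>)
  also have "\<dots> = (\<Sum>l<n. TU n $$ (i,l) * (\<Sum>r<n. Hm n lam k $$ (l,r) * TL n $$ (r,j)))"
    by (intro sum.cong refl arg_cong2[where f="(*)"] mult_entry[of _ n]) (use assms carriers in auto)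
  also have "\<dots> = (\<Sum>l<n. tu i l * (\<Sum>r<n. fourier_coeff (hf lam k) (int l - int r) * tlo r j))"
    using assms by (intro sum.cong refl) (auto simp: TL_def TU_def Hm_def toeplitz_def)
  finally show ?thesis .
qed

lemma det_TL: "det (TL n) = coeff B2 0 ^ n"
proof -
  have "det (TL n) = prod_list (diag_mat (TL n))"
    by (rule det_lower_triangular[of n]) (auto simp: TL_def tlo_def)
  also have "\<dots> = coeff B2 0 ^ n"
    by (simp add: prod_list_diag_prod TL_def tlo_def)
  finally show ?thesis .
qed

lemma det_TU: "det (TU n) = coeff B1 q ^ n"
proof -
  have "det (TU n) = prod_list (diag_mat (TU n))"
    by (rule det_upper_triangular[of _ n]) (auto simp: TU_def tu_def upper_triangular_def coeff_eq_0)
  also have "\<dots> = coeff B1 q ^ n"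
    by (simp add: prod_list_diag_prod TU_def tu_def)
  finally show ?thesis .
qed

lemma det_Ma: "det (Ma n lam k) = coeff B2 0 ^ n * det (Hm n lam k) * coeff B1 q ^ n"
  unfolding Ma_def using carriers
  by (simp add: det_mult[of _ n] mult_carrier_mat[of _ n n _ n] det_TL det_TU)

lemma det_Mb: "det (Mb n lam k) = coeff B1 q ^ n * det (Hm n lam k) * coeff B2 0 ^ n"
  unfolding Mb_def using carriers
  by (simp add: det_mult[of _ n] mult_carrier_mat[of _ n n _ n] det_TL det_TU)

abbreviation "hs lam k m \<equiv> fourier_coeff (hf lam k) m"

lemma inner_a:
  assumes "q \<le> j" "j < n"
  shows "(\<Sum>r<n. hs lam k (int l - int r) * tu r j) = w1 lam k (int l - int j)"
proof -
  have "(\<Sum>r<n. hs lam k (int l - int r) * tu r j) = (\<Sum>t\<le>q. hs lam k (int l - int (j - q + t)) * tu (j - q + t) j)"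
    by (rule sum_window) (use assms in \<open>auto simp: tu_def coeff_eq_0\<close>)
  also have "\<dots> = (\<Sum>t\<le>q. coeff B1 t * hs lam k (int l - int j + int q - int t))"
    using assms by (intro sum.cong refl) (auto simp: tu_def of_nat_diff algebra_simps)
  also have "\<dots> = w1 lam k (int l - int j)" by (simp add: w1_sum)
  finally show ?thesis .
qed

lemma outer_a:
  assumes "d \<le> i" "i < n"
  shows "(\<Sum>l<n. tlo i l * w1 lam k (int l - int j)) = band lam k (int i - int j)"
proof -
  have "(\<Sum>l<n. tlo i l * w1 lam k (int l - int j)) = (\<Sum>t\<le>d. tlo i (i - d + t) * w1 lam k (int (i - d + t) - int j))"
    by (rule sum_window) (use assms in \<open>auto simp: tlo_def coeff_eq_0\<close>)
  also have "\<dots> = (\<Sum>t\<le>d. tlo i (i - d + (d - t)) * w1 lam k (int (i - d + (d - t)) - int j))"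
    by (rule sum_atMost_rev)
  also have "\<dots> = (\<Sum>t\<le>d. coeff B2 t * w1 lam k (int i - int j - int t))"
    using assms by (intro sum.cong refl) (auto simp: tlo_def of_nat_diff algebra_simps)
  also have "\<dots> = band lam k (int i - int j)" by (rule w1_band)
  finally show ?thesis .
qed

lemma outer_a0:
  assumes "int i - int j < - (k + int q)"
  shows "(\<Sum>l<n. tlo i l * w1 lam k (int l - int j)) = 0"
  using assms by (intro sum.neutral) (auto simp: tlo_def w1_zero)

lemma inner_b:
  assumes "j + d < n"
  shows "(\<Sum>r<n. hs lam k (int l - int r) * tlo r j) = w2 lam k (int l - int j)"
proof -
  have "(\<Sum>r<n. hs lam k (int l - int r) * tlo r j) = (\<Sum>t\<le>d. hs lam k (int l - int (j + t)) * tlo (j + t) j)"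
    by (rule sum_window) (use assms in \<open>auto simp: tlo_def coeff_eq_0\<close>)
  also have "\<dots> = (\<Sum>t\<le>d. coeff B2 t * hs lam k (int l - int j - int t))"
    using assms by (intro sum.cong refl) (auto simp: tlo_def algebra_simps)
  also have "\<dots> = w2 lam k (int l - int j)" by (simp add: w2_sum)
  finally show ?thesis .
qed

lemma outer_b:
  assumes "i + q < n"
  shows "(\<Sum>l<n. tu i l * w2 lam k (int l - int j)) = band lam k (int i - int j)"
proof -
  have "(\<Sum>l<n. tu i l * w2 lam k (int l - int j)) = (\<Sum>t\<le>q. tu i (i + t) * w2 lam k (int (i + t) - int j))"
    by (rule sum_window) (use assms in \<open>auto simp: tu_def coeff_eq_0\<close>)
  also have "\<dots> = (\<Sum>t\<le>q. tu i (i + (q - t)) * w2 lam k (int (i + (q - t)) - int j))"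
    by (rule sum_atMost_rev)
  also have "\<dots> = (\<Sum>t\<le>q. coeff B1 t * w2 lam k (int i - int j + int q - int t))"
    using assms by (intro sum.cong refl) (auto simp: tu_def of_nat_diff algebra_simps)
  also have "\<dots> = band lam k (int i - int j)" by (rule w2_band)
  finally show ?thesis .
qed

lemma outer_b0:
  assumes "int i - int j > int p - k"
  shows "(\<Sum>l<n. tu i l * w2 lam k (int l - int j)) = 0"
proof (intro sum.neutral ballI)
  fix l assume "l \<in> {..<n}"
  show "tu i l * w2 lam k (int l - int j) = 0"
  proof (cases "l < i")
    case True
    then show ?thesis by (auto simp: tu_def coeff_eq_0)
  next
    case False
    then show ?thesis using assms by (auto simp: w2_zero)
  qed
qed

lemma Ma_lin:
  assumes "i < n" "j < n"
  shows "Ma n lam k $$ (i,j) =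
    (\<Sum>l<n. tlo i l * (\<Sum>r<n. hs 0 k (int l - int r) * tu r j)) -
    lam * (\<Sum>l<n. tlo i l * (\<Sum>r<n. (if int l - int r = - k then 1 else 0) * tu r j))"
  unfolding Ma_entry[OF assms]
  by (subst hf_lin) (simp add: algebra_simps sum_subtractf sum_distrib_left)

lemma Mb_lin:
  assumes "i < n" "j < n"
  shows "Mb n lam k $$ (i,j) =
    (\<Sum>l<n. tu i l * (\<Sum>r<n. hs 0 k (int l - int r) * tlo r j)) -
    lam * (\<Sum>l<n. tu i l * (\<Sum>r<n. (if int l - int r = - k then 1 else 0) * tlo r j))"
  unfolding Mb_entry[OF assms]
  by (subst hf_lin) (simp add: algebra_simps sum_subtractf sum_distrib_left)

definition Ea :: "nat \<Rightarrow> int \<Rightarrow> nat \<Rightarrow> nat \<Rightarrow> complex poly" where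
  "Ea n k i j = [: Ma n 0 k $$ (i,j), Ma n 1 k $$ (i,j) - Ma n 0 k $$ (i,j) :]"
definition Eb :: "nat \<Rightarrow> int \<Rightarrow> nat \<Rightarrow> nat \<Rightarrow> complex poly" where
  "Eb n k i j = [: Mb n 0 k $$ (i,j), Mb n 1 k $$ (i,j) - Mb n 0 k $$ (i,j) :]"

lemma poly_Ea:
  assumes "i < n" "j < n"
  shows "poly (Ea n k i j) lam = Ma n lam k $$ (i,j)"
proof -
  obtain S0 S1 where S: "\<And>x. Ma n x k $$ (i,j) = S0 - x * S1"
    using Ma_lin[OF assms] by blast
  show ?thesis unfolding Ea_def by (simp add: S algebra_simps)
qed

lemma poly_Eb:
  assumes "i < n" "j < n"
  shows "poly (Eb n k i j) lam = Mb n lam k $$ (i,j)"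
proof -
  obtain S0 S1 where S: "\<And>x. Mb n x k $$ (i,j) = S0 - x * S1"
    using Mb_lin[OF assms] by blast
  show ?thesis unfolding Eb_def by (simp add: S algebra_simps)
qed

lemma deg_Ea: "degree (Ea n k i j) \<le> 1" unfolding Ea_def by simp
lemma deg_Eb: "degree (Eb n k i j) \<le> 1" unfolding Eb_def by simp

lemma Ea_eqI:
  assumes "\<And>lam. Ma n lam k $$ (i,j) = poly Q lam" "i < n" "j < n"
  shows "Ea n k i j = Q"
proof -
  have "poly (Ea n k i j) = poly Q" by (rule ext) (simp add: poly_Ea assms)
  then show ?thesis by (simp add: poly_eq_poly_eq_iff)
qed

lemma Eb_eqI:
  assumes "\<And>lam. Mb n lam k $$ (i,j) = poly Q lam" "i < n" "j < n"
  shows "Eb n k i j = Q"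
proof -
  have "poly (Eb n k i j) = poly Q" by (rule ext) (simp add: poly_Eb assms)
  then show ?thesis by (simp add: poly_eq_poly_eq_iff)
qed

definition bp :: "int \<Rightarrow> int \<Rightarrow> complex poly" where
  "bp k D = (if 0 \<le> D + k + int q then [: ca A B1 (D + k), - cb B1 B2 (D + k) :] else 0)"

lemma band_bp: "band lam k D = poly (bp k D) lam"
  unfolding band_def bp_def Lp_def ca_def cb_def by (simp add: algebra_simps)

lemma Ma_w1:
  assumes "q \<le> j" "i < n" "j < n"
  shows "Ma n lam k $$ (i,j) = (\<Sum>l<n. tlo i l * w1 lam k (int l - int j))"
  unfolding Ma_entry[OF assms(2,3)] using inner_a[OF assms(1,3)] by simp

lemma Mb_w2:
  assumes "j + d < n" "i < n" "j < n"
  shows "Mb n lam k $$ (i,j) = (\<Sum>l<n. tu i l * w2 lam k (int l - int j))"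
  unfolding Mb_entry[OF assms(2,3)] using inner_b[OF assms(1)] by simp

lemma Ea_zero:
  assumes "q \<le> j" "i < n" "j < n" "int i - int j < - (k + int q)"
  shows "Ea n k i j = 0"
  by (rule Ea_eqI) (use assms in \<open>simp_all add: Ma_w1 outer_a0\<close>)

lemma Ea_band:
  assumes "q \<le> j" "d \<le> i" "i < n" "j < n"
  shows "Ea n k i j = bp k (int i - int j)"
  by (rule Ea_eqI) (use assms in \<open>simp_all add: Ma_w1 outer_a band_bp bp_def\<close>)

lemma Eb_zero:
  assumes "j + d < n" "i < n" "j < n" "int i - int j > int p - k"
  shows "Eb n k i j = 0"
  by (rule Eb_eqI) (use assms in \<open>simp_all add: Mb_w2 outer_b0\<close>)

lemma Eb_band:
  assumes "j + d < n" "i + q < n" "i < n" "j < n"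
  shows "Eb n k i j = bp k (int i - int j)"
  by (rule Eb_eqI) (use assms in \<open>simp_all add: Mb_w2 outer_b band_bp\<close>)

lemma vanish_l1: "vanish A B1 B2 (- int q) (lam1 A B1 B2)"
  unfolding vanish_def lam1_def Let_def qq_def by (auto split: option.splits)

lemma vanish_l2: "vanish A B1 B2 (int p) (lam2 A B1 B2)"
  unfolding vanish_def lam2_def Let_def by (auto split: option.splits)

lemma kk1_props: "1 \<le> kk1 A B1 B2" "kk1 A B1 B2 \<le> p + q"
  "\<And>j. - int q \<le> j \<Longrightarrow> j \<le> - int q + int (kk1 A B1 B2) - 1 \<Longrightarrow> vanish A B1 B2 j (lam1 A B1 B2)"
proof -
  define S where "S = {\<kappa> \<in> {1..p + q}. \<forall>j \<in> {- int q .. - int q + int \<kappa> - 1}. vanish A B1 B2 j (lam1 A B1 B2)}"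
  have kk: "kk1 A B1 B2 = Max S" unfolding kk1_def S_def qq_def by simp
  have fin: "finite S" unfolding S_def by auto
  have "\<forall>j \<in> {- int q .. - int q + int 1 - 1}. vanish A B1 B2 j (lam1 A B1 B2)"
    using vanish_l1 by simp
  then have "1 \<in> S" unfolding S_def using p_pos by simp
  then have ne: "S \<noteq> {}" by auto
  have mem: "Max S \<in> S" by (rule Max_in[OF fin ne])
  have "1 \<le> Max S" by (rule Max_ge[OF fin \<open>1 \<in> S\<close>])
  then show "1 \<le> kk1 A B1 B2" using kk by simp
  have memS: "kk1 A B1 B2 \<in> S" using mem kk by simp
  then show "kk1 A B1 B2 \<le> p + q" unfolding S_def by simp
  fix j assume "- int q \<le> j" "j \<le> - int q + int (kk1 A B1 B2) - 1"
  then show "vanish A B1 B2 j (lam1 A B1 B2)" using memS unfolding S_def by simp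
qed

lemma kk2_props: "1 \<le> kk2 A B1 B2" "kk2 A B1 B2 \<le> p + q"
  "\<And>j. int p - int (kk2 A B1 B2) + 1 \<le> j \<Longrightarrow> j \<le> int p \<Longrightarrow> vanish A B1 B2 j (lam2 A B1 B2)"
proof -
  define S where "S = {\<kappa> \<in> {1..p + q}. \<forall>j \<in> {int p - int \<kappa> + 1 .. int p}. vanish A B1 B2 j (lam2 A B1 B2)}"
  have kk: "kk2 A B1 B2 = Max S" unfolding kk2_def S_def qq_def by simp
  have fin: "finite S" unfolding S_def by auto
  have "\<forall>j \<in> {int p - int 1 + 1 .. int p}. vanish A B1 B2 j (lam2 A B1 B2)"
    using vanish_l2 by simp
  then have "1 \<in> S" unfolding S_def using p_pos by simp
  then have ne: "S \<noteq> {}" by auto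
  have mem: "Max S \<in> S" by (rule Max_in[OF fin ne])
  have "1 \<le> Max S" by (rule Max_ge[OF fin \<open>1 \<in> S\<close>])
  then show "1 \<le> kk2 A B1 B2" using kk by simp
  have memS: "kk2 A B1 B2 \<in> S" using mem kk by simp
  then show "kk2 A B1 B2 \<le> p + q" unfolding S_def by simp
  fix j assume "int p - int (kk2 A B1 B2) + 1 \<le> j" "j \<le> int p"
  then show "vanish A B1 B2 j (lam2 A B1 B2)" using memS unfolding S_def by simp
qed

definition Gp :: "complex option \<Rightarrow> complex poly \<Rightarrow> bool" where
  "Gp l x = (case l of None \<Rightarrow> degree x = 0 | Some \<mu> \<Rightarrow> [:-\<mu>, 1:] dvd x)"

lemma Gp_0: "Gp l 0" unfolding Gp_def by (auto split: option.splits)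

lemma ca_cb_big: "j > int p \<Longrightarrow> ca A B1 j = 0 \<and> cb B1 B2 j = 0"
  unfolding ca_def cb_def using degAB by (auto intro!: coeff_eq_0)

lemma bp_nz: "bp k D \<noteq> 0 \<Longrightarrow> - (k + int q) \<le> D \<and> D + k \<le> int p"
proof -
  assume nz: "bp k D \<noteq> 0"
  then have "0 \<le> D + k + int q" unfolding bp_def by (auto split: if_splits)
  moreover have "D + k \<le> int p"
  proof (rule ccontr)
    assume "\<not> D + k \<le> int p"
    then have "ca A B1 (D + k) = 0 \<and> cb B1 B2 (D + k) = 0" by (intro ca_cb_big) auto
    then show False using nz unfolding bp_def by (simp split: if_splits)
  qed
  ultimately show ?thesis by auto
qed

lemma bp_G:
  assumes "vanish A B1 B2 (D + k) l"
  shows "Gp l (bp k D)"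
proof (cases "0 \<le> D + k + int q")
  case False then show ?thesis by (simp add: bp_def Gp_0)
next
  case True
  show ?thesis
  proof (cases l)
    case None
    then show ?thesis using assms True by (simp add: bp_def Gp_def vanish_def)
  next
    case (Some \<mu>)
    then have e: "ca A B1 (D + k) = cb B1 B2 (D + k) * \<mu>" using assms by (simp add: vanish_def)
    have "[: ca A B1 (D + k), - cb B1 B2 (D + k) :] = Polynomial.smult (- cb B1 B2 (D + k)) [:-\<mu>, 1:]"
      by (simp add: e)
    then have "[:-\<mu>, 1:] dvd [: ca A B1 (D + k), - cb B1 B2 (D + k) :]" by (metis dvd_smult dvd_refl)
    then show ?thesis using Some True by (simp add: bp_def Gp_def)
  qed
qed

lemma detp_conclude:
  fixes E :: "nat \<Rightarrow> nat \<Rightarrow> complex poly"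
  assumes deg: "\<And>i j. degree (E i j) \<le> 1"
    and per: "\<And>\<sigma>. \<sigma> permutes {0..<n} \<Longrightarrow> (\<forall>i<n. E i (\<sigma> i) \<noteq> 0) \<Longrightarrow>
                 \<exists>Lo\<subseteq>{..<n}. M \<le> real (card Lo) \<and> (\<forall>i\<in>Lo. Gp l (E i (\<sigma> i)))"
    and Mn: "M \<le> real n"
  shows "case l of Some \<mu> \<Rightarrow> [:-\<mu>, 1:] ^ nat \<lceil>M\<rceil> dvd detp n E
          | None \<Rightarrow> real (degree (detp n E)) \<le> real n - M"
proof (cases l)
  case None
  define D where "D = nat \<lfloor>real n - M\<rfloor>"
  have "degree (detp n E) \<le> D"
  proof (rule detp_deg)
    fix \<sigma> :: "nat \<Rightarrow> nat" assume \<sigma>: "\<sigma> permutes {0..<n}"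
    show "degree (\<Prod>i\<in>{0..<n}. E i (\<sigma> i)) \<le> D"
    proof (cases "\<forall>i<n. E i (\<sigma> i) \<noteq> 0")
      case False
      then have "(\<Prod>i\<in>{0..<n}. E i (\<sigma> i)) = 0" by (auto simp: prod_zero_iff)
      then show ?thesis by (metis degree_0 zero_le)
    next
      case True
      obtain Lo where Lo: "Lo \<subseteq> {..<n}" "M \<le> real (card Lo)" "\<forall>i\<in>Lo. Gp l (E i (\<sigma> i))"
        using per[OF \<sigma> True] by blast
      have "degree (\<Prod>i\<in>{0..<n}. E i (\<sigma> i)) \<le> n - card Lo"
        by (rule prod_deg_from_Lo[OF Lo(1)]) (use Lo(3) None deg in \<open>auto simp: Gp_def\<close>)
      moreover have "n - card Lo \<le> D"
      proof -
        have "card Lo \<le> n" using Lo(1) by (metis card_lessThan card_mono finite_lessThan)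
        then have "real (n - card Lo) \<le> real n - M" using Lo(2) by (simp add: of_nat_diff)
        then have "int (n - card Lo) \<le> \<lfloor>real n - M\<rfloor>" by (simp add: le_floor_iff)
        then show ?thesis unfolding D_def by linarith
      qed
      ultimately show ?thesis by linarith
    qed
  qed
  moreover have "real D \<le> real n - M" unfolding D_def using Mn by simp
  ultimately have "real (degree (detp n E)) \<le> real n - M" by linarith
  then show ?thesis using None by simp
next
  case (Some \<mu>)
  have "[:-\<mu>, 1:] ^ nat \<lceil>M\<rceil> dvd detp n E"
  proof (rule detp_dvd)
    fix \<sigma> :: "nat \<Rightarrow> nat" assume \<sigma>: "\<sigma> permutes {0..<n}"
    show "[:-\<mu>, 1:] ^ nat \<lceil>M\<rceil> dvd (\<Prod>i\<in>{0..<n}. E i (\<sigma> i))"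
    proof (cases "\<forall>i<n. E i (\<sigma> i) \<noteq> 0")
      case False
      then have "(\<Prod>i\<in>{0..<n}. E i (\<sigma> i)) = 0" by (auto simp: prod_zero_iff)
      then show ?thesis by (metis dvd_0_right)
    next
      case True
      obtain Lo where Lo: "Lo \<subseteq> {..<n}" "M \<le> real (card Lo)" "\<forall>i\<in>Lo. Gp l (E i (\<sigma> i))"
        using per[OF \<sigma> True] by blast
      have "[:-\<mu>, 1:] ^ card Lo dvd (\<Prod>i\<in>{0..<n}. E i (\<sigma> i))"
        by (rule prod_dvd_from_Lo[OF Lo(1)]) (use Lo(3) Some in \<open>auto simp: Gp_def\<close>)
      moreover have "nat \<lceil>M\<rceil> \<le> card Lo" using Lo(2) by (simp add: ceiling_le_iff nat_le_iff)
      ultimately show ?thesis by (meson dvd_trans le_imp_power_dvd)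
    qed
  qed
  then show ?thesis using Some by simp
qed

definition cst :: real where "cst = real ((d + q) * (1 + p + q + d))"

lemma per_a:
  assumes k: "- int q + 1 \<le> k" "k \<le> int p - 1"
    and \<sigma>: "\<sigma> permutes {0..<n}" and nz: "\<forall>i<n. Ea n k i (\<sigma> i) \<noteq> 0"
  shows "\<exists>Lo\<subseteq>{..<n}. m1 A B1 B2 k * real n - cst \<le> real (card Lo) \<and> (\<forall>i\<in>Lo. Gp (lam1 A B1 B2) (Ea n k i (\<sigma> i)))"
proof -
  let ?C = "int (p + q + d)" and ?s = "int q + k" and ?\<kappa> = "int (kk1 A B1 B2)"
  have kk: "1 \<le> kk1 A B1 B2" by (rule kk1_props(1))
  have h1: "(\<Sum>i<n. int i - int (\<sigma> i)) = 0" by (rule perm_sum0[OF \<sigma>])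
  have h2: "card {i. i < n \<and> i < d} \<le> d"
    using card_mono[of "{..<d}" "{i. i < n \<and> i < d}"] by auto
  have h3: "card {j. j < n \<and> j < q} \<le> q"
    using card_mono[of "{..<q}" "{j. j < n \<and> j < q}"] by auto
  have h4: "\<forall>i<n. \<forall>j<n. (i < d \<or> j < q) \<longrightarrow> Ea n k i j \<noteq> 0 \<longrightarrow> - ?C \<le> int i - int j"
  proof (intro allI impI)
    fix i j assume ij: "i < n" "j < n" "i < d \<or> j < q" "Ea n k i j \<noteq> 0"
    show "- ?C \<le> int i - int j"
    proof (cases "j < q")
      case True then show ?thesis by simp
    next
      case False
      then have "\<not> int i - int j < - (k + int q)" using Ea_zero[of j i n k] ij by auto
      then show ?thesis using k by simp
    qed
  qed
  have h5: "\<forall>i<n. \<forall>j<n. \<not> (i < d \<or> j < q) \<longrightarrow> Ea n k i j \<noteq> 0 \<longrightarrow> - ?s \<le> int i - int j"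
  proof (intro allI impI)
    fix i j assume ij: "i < n" "j < n" "\<not> (i < d \<or> j < q)" "Ea n k i j \<noteq> 0"
    then have "bp k (int i - int j) \<noteq> 0" using Ea_band[of j i n k] by auto
    then show "- ?s \<le> int i - int j" using bp_nz by fastforce
  qed
  have h6: "\<forall>i<n. \<forall>j<n. \<not> (i < d \<or> j < q) \<longrightarrow> int i - int j < ?\<kappa> - ?s \<longrightarrow> Gp (lam1 A B1 B2) (Ea n k i j)"
  proof (intro allI impI)
    fix i j assume ij: "i < n" "j < n" "\<not> (i < d \<or> j < q)" "int i - int j < ?\<kappa> - ?s"
    have e: "Ea n k i j = bp k (int i - int j)" using Ea_band[of j i n k] ij by auto
    show "Gp (lam1 A B1 B2) (Ea n k i j)"
    proof (cases "bp k (int i - int j) = 0")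
      case True then show ?thesis using e Gp_0 by simp
    next
      case False
      then have "- (k + int q) \<le> int i - int j" using bp_nz by blast
      then have "vanish A B1 B2 (int i - int j + k) (lam1 A B1 B2)"
        using ij(4) by (intro kk1_props(3)) auto
      then show ?thesis using e bp_G by simp
    qed
  qed
  have hC: "0 \<le> ?C" by simp
  have hk: "0 < ?\<kappa>" using kk by simp
  have hs: "0 \<le> ?s" using k by simp
  have "\<exists>Lo \<subseteq> {..<n}. real (card Lo) \<ge> max (1 - real_of_int ?s / real_of_int ?\<kappa>) 0 * real n - real (d + q) * (1 + real_of_int ?C)
            \<and> (\<forall>i\<in>Lo. Gp (lam1 A B1 B2) (Ea n k i (\<sigma> i)))"
    by (rule perm_good[where \<delta>="\<lambda>i j. int i - int j" and E="Ea n k" and R="\<lambda>i. i < d" and Cc="\<lambda>j. j < q" and ea=d and eb=q, OF \<sigma> nz h1 h2 h3 h4 h5 h6 hC hk hs])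

  moreover have "max (1 - real_of_int ?s / real_of_int ?\<kappa>) 0 = m1 A B1 B2 k"
    unfolding m1_def qq_def by simp
  moreover have "real (d + q) * (1 + real_of_int ?C) = cst"
    unfolding cst_def by (simp add: algebra_simps)
  ultimately show ?thesis by auto
qed

lemma per_b:
  assumes k: "- int q + 1 \<le> k" "k \<le> int p - 1"
    and \<sigma>: "\<sigma> permutes {0..<n}" and nz: "\<forall>i<n. Eb n k i (\<sigma> i) \<noteq> 0"
  shows "\<exists>Lo\<subseteq>{..<n}. m2 A B1 B2 k * real n - cst \<le> real (card Lo) \<and> (\<forall>i\<in>Lo. Gp (lam2 A B1 B2) (Eb n k i (\<sigma> i)))"
proof -
  let ?C = "int (p + q + d)" and ?s = "int p - k" and ?\<kappa> = "int (kk2 A B1 B2)"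
  have kk: "1 \<le> kk2 A B1 B2" "kk2 A B1 B2 \<le> p + q" by (rule kk2_props(1), rule kk2_props(2))
  have h1: "(\<Sum>i<n. int (\<sigma> i) - int i) = 0" by (rule perm_sum0'[OF \<sigma>])
  have h2: "card {i. i < n \<and> n \<le> i + q} \<le> q"
  proof -
    have "{i. i < n \<and> n \<le> i + q} \<subseteq> {n - q..<n}" by auto
    then have "card {i. i < n \<and> n \<le> i + q} \<le> card {n - q..<n}" by (rule card_mono[rotated]) simp
    then show ?thesis by simp
  qed
  have h3: "card {j. j < n \<and> n \<le> j + d} \<le> d"
  proof -
    have "{j. j < n \<and> n \<le> j + d} \<subseteq> {n - d..<n}" by auto
    then have "card {j. j < n \<and> n \<le> j + d} \<le> card {n - d..<n}" by (rule card_mono[rotated]) simp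
    then show ?thesis by simp
  qed
  have h4: "\<forall>i<n. \<forall>j<n. (n \<le> i + q \<or> n \<le> j + d) \<longrightarrow> Eb n k i j \<noteq> 0 \<longrightarrow> - ?C \<le> int j - int i"
  proof (intro allI impI)
    fix i j assume ij: "i < n" "j < n" "n \<le> i + q \<or> n \<le> j + d" "Eb n k i j \<noteq> 0"
    show "- ?C \<le> int j - int i"
    proof (cases "n \<le> j + d")
      case True then show ?thesis using ij by simp
    next
      case False
      then have "\<not> int i - int j > int p - k" using Eb_zero[of j n i k] ij by auto
      then show ?thesis using k by simp
    qed
  qed
  have h5: "\<forall>i<n. \<forall>j<n. \<not> (n \<le> i + q \<or> n \<le> j + d) \<longrightarrow> Eb n k i j \<noteq> 0 \<longrightarrow> - ?s \<le> int j - int i"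
  proof (intro allI impI)
    fix i j assume ij: "i < n" "j < n" "\<not> (n \<le> i + q \<or> n \<le> j + d)" "Eb n k i j \<noteq> 0"
    then have "bp k (int i - int j) \<noteq> 0" using Eb_band[of j n i k] by auto
    then show "- ?s \<le> int j - int i" using bp_nz by fastforce
  qed
  have h6: "\<forall>i<n. \<forall>j<n. \<not> (n \<le> i + q \<or> n \<le> j + d) \<longrightarrow> int j - int i < ?\<kappa> - ?s \<longrightarrow> Gp (lam2 A B1 B2) (Eb n k i j)"
  proof (intro allI impI)
    fix i j assume ij: "i < n" "j < n" "\<not> (n \<le> i + q \<or> n \<le> j + d)" "int j - int i < ?\<kappa> - ?s"
    have e: "Eb n k i j = bp k (int i - int j)" using Eb_band[of j n i k] ij by auto
    show "Gp (lam2 A B1 B2) (Eb n k i j)"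
    proof (cases "bp k (int i - int j) = 0")
      case True then show ?thesis using e Gp_0 by simp
    next
      case False
      then have "int i - int j + k \<le> int p" using bp_nz by blast
      then have "vanish A B1 B2 (int i - int j + k) (lam2 A B1 B2)"
        using ij(4) by (intro kk2_props(3)) auto
      then show ?thesis using e bp_G by simp
    qed
  qed
  have hC: "0 \<le> ?C" by simp
  have hk: "0 < ?\<kappa>" using kk by simp
  have hs: "0 \<le> ?s" using k by simp
  have "\<exists>Lo \<subseteq> {..<n}. real (card Lo) \<ge> max (1 - real_of_int ?s / real_of_int ?\<kappa>) 0 * real n - real (q + d) * (1 + real_of_int ?C)
            \<and> (\<forall>i\<in>Lo. Gp (lam2 A B1 B2) (Eb n k i (\<sigma> i)))"
    by (rule perm_good[where \<delta>="\<lambda>i j. int j - int i" and E="Eb n k" and R="\<lambda>i. n \<le> i + q" and Cc="\<lambda>j. n \<le> j + d" and ea=q and eb=d, OF \<sigma> nz h1 h2 h3 h4 h5 h6 hC hk hs])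

  moreover have "max (1 - real_of_int ?s / real_of_int ?\<kappa>) 0 = m2 A B1 B2 k"
    unfolding m2_def by simp
  moreover have "real (q + d) * (1 + real_of_int ?C) = cst"
    unfolding cst_def by (simp add: algebra_simps)
  ultimately show ?thesis by auto
qed

lemma strip_some:
  fixes P :: "complex poly"
  assumes P: "P \<noteq> 0"
  shows "degree P = order \<mu> P + degree (strip_root (Some \<mu>) P)"
    "strip_root (Some \<mu>) P \<noteq> 0"
    "\<And>\<nu>. \<nu> \<noteq> \<mu> \<Longrightarrow> order \<nu> (strip_root (Some \<mu>) P) = order \<nu> P"
proof -
  define X where "X = [:-\<mu>, 1:] ^ order \<mu> P"
  define Q where "Q = P div X"
  have sQ: "strip_root (Some \<mu>) P = Q" unfolding strip_root_def Q_def X_def by simp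
  have PXQ: "P = X * Q" unfolding Q_def X_def using order_1[of \<mu> P] by (simp add: dvd_div_mult_self mult.commute)
  have Q0: "Q \<noteq> 0" using P PXQ by auto
  have X0: "X \<noteq> 0" unfolding X_def by simp
  have "degree P = degree X + degree Q" using PXQ X0 Q0 by (simp add: degree_mult_eq)
  also have "degree X = order \<mu> P" unfolding X_def by (simp add: degree_linear_power)
  finally show "degree P = order \<mu> P + degree (strip_root (Some \<mu>) P)" using sQ by simp
  show "strip_root (Some \<mu>) P \<noteq> 0" using sQ Q0 by simp
  fix \<nu> assume "\<nu> \<noteq> \<mu>"
  then have "poly X \<nu> \<noteq> 0" unfolding X_def by simp
  then have oX: "order \<nu> X = 0" by (rule order_0I)
  have "order \<nu> P = order \<nu> X + order \<nu> Q" using PXQ P order_mult[of X Q \<nu>] by simp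
  then show "order \<nu> (strip_root (Some \<mu>) P) = order \<nu> P" using oX sQ by simp
qed

lemma strip_some_self:
  fixes P :: "complex poly"
  assumes P: "P \<noteq> 0"
  shows "strip_root (Some \<mu>) (strip_root (Some \<mu>) P) = strip_root (Some \<mu>) P"
proof -
  define X where "X = [:-\<mu>, 1:] ^ order \<mu> P"
  define Q where "Q = P div X"
  have sQ: "strip_root (Some \<mu>) P = Q" unfolding strip_root_def Q_def X_def by simp
  have PXQ: "P = X * Q" unfolding Q_def X_def using order_1[of \<mu> P] by (simp add: dvd_div_mult_self mult.commute)
  have Q0: "Q \<noteq> 0" using P PXQ by auto
  have X0: "X \<noteq> 0" unfolding X_def by simp
  have "order \<mu> P = order \<mu> X + order \<mu> Q" using PXQ P order_mult[of X Q \<mu>] by simp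
  moreover have "order \<mu> X = order \<mu> P" unfolding X_def by (simp add: order_power_n_n)
  ultimately have "order \<mu> Q = 0" by simp
  then show ?thesis using sQ by (simp add: strip_root_def)
qed

lemma strip_zero: "strip_root l 0 = 0"
  unfolding strip_root_def by (auto split: option.splits)

lemma m_bound_gen:
  fixes s \<kappa> N :: real
  assumes "0 \<le> s" "s \<le> N" "1 \<le> \<kappa>" "\<kappa> \<le> N"
  shows "max (1 - s / \<kappa>) 0 \<le> 1 - s / N" "0 \<le> max (1 - s / \<kappa>) 0" "max (1 - s / \<kappa>) 0 \<le> 1"
proof -
  have N: "N > 0" using assms by simp
  have "s / N \<le> s / \<kappa>" using assms by (intro divide_left_mono) auto
  moreover have "s / N \<le> 1" using assms N by simp
  ultimately show "max (1 - s / \<kappa>) 0 \<le> 1 - s / N" by simp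
  show "0 \<le> max (1 - s / \<kappa>) 0" by simp
  have "0 \<le> s / \<kappa>" using assms by simp
  then show "max (1 - s / \<kappa>) 0 \<le> 1" by simp
qed

lemma m_bounds:
  assumes k: "- int q + 1 \<le> k" "k \<le> int p - 1"
  shows "0 \<le> m1 A B1 B2 k" "m1 A B1 B2 k \<le> 1" "0 \<le> m2 A B1 B2 k" "m2 A B1 B2 k \<le> 1"
    "m1 A B1 B2 k + m2 A B1 B2 k \<le> 1"
proof -
  let ?N = "real (p + q)"
  have a: "max (1 - real_of_int (int q + k) / real (kk1 A B1 B2)) 0 \<le> 1 - real_of_int (int q + k) / ?N"
     "0 \<le> max (1 - real_of_int (int q + k) / real (kk1 A B1 B2)) 0"
     "max (1 - real_of_int (int q + k) / real (kk1 A B1 B2)) 0 \<le> 1"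
    using m_bound_gen[of "real_of_int (int q + k)" "real (p + q)" "real (kk1 A B1 B2)"] k kk1_props(1,2) by simp_all
  have b: "max (1 - real_of_int (int p - k) / real (kk2 A B1 B2)) 0 \<le> 1 - real_of_int (int p - k) / ?N"
     "0 \<le> max (1 - real_of_int (int p - k) / real (kk2 A B1 B2)) 0"
     "max (1 - real_of_int (int p - k) / real (kk2 A B1 B2)) 0 \<le> 1"
    using m_bound_gen[of "real_of_int (int p - k)" "real (p + q)" "real (kk2 A B1 B2)"] k kk2_props(1,2) by simp_all
  have m1e: "m1 A B1 B2 k = max (1 - real_of_int (int q + k) / real (kk1 A B1 B2)) 0" unfolding m1_def qq_def by simp
  have m2e: "m2 A B1 B2 k = max (1 - real_of_int (int p - k) / real (kk2 A B1 B2)) 0" unfolding m2_def by simp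
  show "0 \<le> m1 A B1 B2 k" "m1 A B1 B2 k \<le> 1" "0 \<le> m2 A B1 B2 k" "m2 A B1 B2 k \<le> 1"
    using a b m1e m2e by simp_all
  have N: "?N > 0" using p_pos by simp
  have "real_of_int (int q + k) / ?N + real_of_int (int p - k) / ?N = 1"
    using N by (simp add: add_divide_distrib[symmetric])
  then show "m1 A B1 B2 k + m2 A B1 B2 k \<le> 1" using a(1) b(1) m1e m2e by linarith
qed

lemma m_pos_cover:
  assumes "m1 A B1 B2 k > 0" "m2 A B1 B2 k > 0" "- int q \<le> j" "j \<le> int p"
  shows "vanish A B1 B2 j (lam1 A B1 B2) \<or> vanish A B1 B2 j (lam2 A B1 B2)"
proof -
  have k1: "int q + k < int (kk1 A B1 B2)"
  proof (rule ccontr)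
    assume "\<not> ?thesis"
    then have "real_of_int (int q + k) / real (kk1 A B1 B2) \<ge> 1"
      using kk1_props(1) by (simp add: le_divide_eq)
    then show False using assms(1) unfolding m1_def qq_def by simp
  qed
  have k2: "int p - k < int (kk2 A B1 B2)"
  proof (rule ccontr)
    assume "\<not> ?thesis"
    then have "real_of_int (int p - k) / real (kk2 A B1 B2) \<ge> 1"
      using kk2_props(1) by (simp add: le_divide_eq)
    then show False using assms(2) unfolding m2_def by simp
  qed
  show ?thesis
  proof (cases "j \<le> - int q + int (kk1 A B1 B2) - 1")
    case True then show ?thesis using kk1_props(3) assms(3) by blast
  next
    case False then show ?thesis using kk2_props(3) assms(4) k1 k2 by simp
  qed
qed

lemma not_both_None:
  assumes "m1 A B1 B2 k > 0" "m2 A B1 B2 k > 0" "lam1 A B1 B2 = None" "lam2 A B1 B2 = None"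
  shows False
proof -
  have "coeff (B1 * B2) i = 0" for i
  proof (cases "i \<le> p + q")
    case True
    have "vanish A B1 B2 (int i - int q) None"
      using m_pos_cover[OF assms(1,2), of "int i - int q"] True assms(3,4) by auto
    then show ?thesis unfolding vanish_def cb_def by simp
  next
    case False then show ?thesis using degAB by (intro coeff_eq_0) auto
  qed
  then have "B1 * B2 = 0" by (intro poly_eqI) simp
  then show False using B1_nz B2_nz by simp
qed

lemma not_both_same:
  assumes "m1 A B1 B2 k > 0" "m2 A B1 B2 k > 0" "lam1 A B1 B2 = Some \<mu>" "lam2 A B1 B2 = Some \<mu>"
  shows False
proof -
  have "coeff A i = coeff (Polynomial.smult \<mu> (B1 * B2)) i" for i
  proof (cases "i \<le> p + q")
    case True
    have "vanish A B1 B2 (int i - int q) (Some \<mu>)"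
      using m_pos_cover[OF assms(1,2), of "int i - int q"] True assms(3,4) by auto
    then show ?thesis unfolding vanish_def cb_def ca_def by simp
  next
    case False then show ?thesis using degAB by (simp add: coeff_eq_0)
  qed
  then have AB: "A = Polynomial.smult \<mu> (B1 * B2)" by (intro poly_eqI) simp
  obtain z where z: "poly B1 z = 0" using exists_root q_pos unfolding qq_def by fastforce
  then have "poly A z = 0" using AB by simp
  then show False using coprime_roots z by simp
qed

lemma ord_bound:
  fixes P :: "complex poly"
  assumes "P \<noteq> 0" "[:-\<mu>, 1:] ^ nat \<lceil>M\<rceil> dvd P"
  shows "M \<le> real (order \<mu> P)"
proof -
  have "nat \<lceil>M\<rceil> \<le> order \<mu> P" using assms order_divides by blast
  moreover have "M \<le> real (nat \<lceil>M\<rceil>)" by linarith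
  ultimately show ?thesis by linarith
qed

lemma C_gen:
  fixes P :: "complex poly" and m1 m2 c :: real
  assumes degn: "real (degree P) \<le> real n" and c: "c \<ge> 0"
    and m: "0 \<le> m1" "0 \<le> m2" "m1 + m2 \<le> 1"
    and A: "case l1 of Some \<mu> \<Rightarrow> [:-\<mu>, 1:] ^ nat \<lceil>m1 * real n - c\<rceil> dvd P
              | None \<Rightarrow> real (degree P) \<le> (1 - m1) * real n + c"
    and B: "case l2 of Some \<mu> \<Rightarrow> [:-\<mu>, 1:] ^ nat \<lceil>m2 * real n - c\<rceil> dvd P
              | None \<Rightarrow> real (degree P) \<le> (1 - m2) * real n + c"
    and nb1: "m1 > 0 \<Longrightarrow> m2 > 0 \<Longrightarrow> l1 = None \<Longrightarrow> l2 = None \<Longrightarrow> False"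
    and nb2: "\<And>\<mu>. m1 > 0 \<Longrightarrow> m2 > 0 \<Longrightarrow> l1 = Some \<mu> \<Longrightarrow> l2 = Some \<mu> \<Longrightarrow> False"
  shows "real (degree (strip_root l2 (strip_root l1 P))) \<le> (1 - m1 - m2) * real n + 2 * c"
proof (cases "P = 0")
  case True
  have "0 \<le> (1 - m1 - m2) * real n" using m by simp
  then show ?thesis using True c by (simp add: strip_zero)
next
  case P0: False
  show ?thesis
  proof (cases l1)
    case None1: None
    show ?thesis
    proof (cases l2)
      case None2: None
      have dA: "real (degree P) \<le> (1 - m1) * real n + c" using A None1 by simp
      have dB: "real (degree P) \<le> (1 - m2) * real n + c" using B None2 by simp
      have "\<not> (m1 > 0 \<and> m2 > 0)" using nb1 None1 None2 by blast
      then have "m1 = 0 \<or> m2 = 0" using m by linarith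
      then have "real (degree P) \<le> (1 - m1 - m2) * real n + 2 * c" using dA dB c by (auto simp: algebra_simps)
      then show ?thesis using None1 None2 by (simp add: strip_root_def)
    next
      case (Some \<mu>2)
      have dA: "real (degree P) \<le> (1 - m1) * real n + c" using A None1 by simp
      have o2: "m2 * real n - c \<le> real (order \<mu>2 P)" using B Some P0 by (intro ord_bound) auto
      have "degree P = order \<mu>2 P + degree (strip_root (Some \<mu>2) P)" by (rule strip_some(1)[OF P0])
      then show ?thesis using dA o2 None1 Some by (simp add: strip_root_def[of None] algebra_simps)
    qed
  next
    case (Some \<mu>1)
    have o1: "m1 * real n - c \<le> real (order \<mu>1 P)" using A Some P0 by (intro ord_bound) auto
    have e1: "degree P = order \<mu>1 P + degree (strip_root (Some \<mu>1) P)" by (rule strip_some(1)[OF P0])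
    have Q0: "strip_root (Some \<mu>1) P \<noteq> 0" by (rule strip_some(2)[OF P0])
    show ?thesis
    proof (cases l2)
      case None
      have dB: "real (degree P) \<le> (1 - m2) * real n + c" using B None by simp
      show ?thesis using dB o1 e1 None Some by (simp add: strip_root_def[of None] algebra_simps)
    next
      case (Some \<mu>2)
      have o2: "m2 * real n - c \<le> real (order \<mu>2 P)" using B Some P0 by (intro ord_bound) auto
      show ?thesis
      proof (cases "\<mu>1 = \<mu>2")
        case True
        have "\<not> (m1 > 0 \<and> m2 > 0)" using nb2 \<open>l1 = Some \<mu>1\<close> Some True by blast
        then have "m1 = 0 \<or> m2 = 0" using m by linarith
        moreover have "strip_root l2 (strip_root l1 P) = strip_root (Some \<mu>1) P"
          using \<open>l1 = Some \<mu>1\<close> Some True strip_some_self[OF P0] by simp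
        ultimately show ?thesis using o1 o2 e1 degn True c by (auto simp: algebra_simps)
      next
        case False
        have e2: "degree (strip_root (Some \<mu>1) P) = order \<mu>2 (strip_root (Some \<mu>1) P) + degree (strip_root (Some \<mu>2) (strip_root (Some \<mu>1) P))"
          by (rule strip_some(1)[OF Q0])
        have "order \<mu>2 (strip_root (Some \<mu>1) P) = order \<mu>2 P"
          using strip_some(3)[OF P0] False by metis
        then show ?thesis using e1 e2 o1 o2 degn \<open>l1 = Some \<mu>1\<close> Some by (simp add: algebra_simps)
      qed
    qed
  qed
qed

lemma Ma_carrier: "Ma n lam k \<in> carrier_mat n n"
  unfolding Ma_def using carriers by (intro mult_carrier_mat[of _ n n _ n]) auto
lemma Mb_carrier: "Mb n lam k \<in> carrier_mat n n"
  unfolding Mb_def using carriers by (intro mult_carrier_mat[of _ n n _ n]) auto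

lemma cst_nonneg: "cst \<ge> 0" unfolding cst_def by simp

lemma main_nk:
  assumes k: "- int q + 1 \<le> k" "k \<le> int p - 1"
  shows "\<exists>P :: complex poly.
         (\<forall>lam. poly P lam = Determinant.det
                 (toeplitz n (\<lambda>z. z powi (- k) * (symb A B1 B2 z - lam)))) \<and>
         (case lam1 A B1 B2 of
            Some l1 \<Rightarrow> [:-l1, 1:] ^ nat \<lceil>m1 A B1 B2 k * real n - cst\<rceil> dvd P
          | None \<Rightarrow> real (degree P) \<le> (1 - m1 A B1 B2 k) * real n + cst) \<and>
         (case lam2 A B1 B2 of
            Some l2 \<Rightarrow> [:-l2, 1:] ^ nat \<lceil>m2 A B1 B2 k * real n - cst\<rceil> dvd P
          | None \<Rightarrow> real (degree P) \<le> (1 - m2 A B1 B2 k) * real n + cst) \<and>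
         real (degree (strip_root (lam2 A B1 B2) (strip_root (lam1 A B1 B2) P)))
            \<le> mm A B1 B2 k * real n + 2 * cst"
proof -
  define cd :: complex where "cd = coeff B2 0 ^ n * coeff B1 q ^ n"
  have cd0: "cd \<noteq> 0" unfolding cd_def using B2_0 lcB1 by simp
  define P where "P = Polynomial.smult (inverse cd) (detp n (Ea n k))"
  have dA: "poly (detp n (Ea n k)) lam = cd * det (Hm n lam k)" for lam
  proof -
    have "poly (detp n (Ea n k)) lam = det (Ma n lam k)"
      by (rule poly_detp[OF Ma_carrier]) (simp add: poly_Ea)
    also have "\<dots> = cd * det (Hm n lam k)" unfolding det_Ma cd_def by (simp add: algebra_simps)
    finally show ?thesis .
  qed
  have dB: "poly (detp n (Eb n k)) lam = cd * det (Hm n lam k)" for lam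
  proof -
    have "poly (detp n (Eb n k)) lam = det (Mb n lam k)"
      by (rule poly_detp[OF Mb_carrier]) (simp add: poly_Eb)
    also have "\<dots> = cd * det (Hm n lam k)" unfolding det_Mb cd_def by (simp add: algebra_simps)
    finally show ?thesis .
  qed
  have polyP: "poly P lam = det (Hm n lam k)" for lam
    unfolding P_def using dA cd0 by simp
  have PB: "P = Polynomial.smult (inverse cd) (detp n (Eb n k))"
  proof -
    have "poly P = poly (Polynomial.smult (inverse cd) (detp n (Eb n k)))"
      by (rule ext) (simp add: polyP dB cd0)
    then show ?thesis by (simp add: poly_eq_poly_eq_iff)
  qed
  have mb: "0 \<le> m1 A B1 B2 k" "m1 A B1 B2 k \<le> 1" "0 \<le> m2 A B1 B2 k" "m2 A B1 B2 k \<le> 1"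
    "m1 A B1 B2 k + m2 A B1 B2 k \<le> 1" using m_bounds[OF k] by auto
  have c0: "cst \<ge> 0" by (rule cst_nonneg)
  have degP: "degree P \<le> n"
  proof -
    have "degree (detp n (Ea n k)) \<le> n"
    proof (rule detp_deg)
      fix \<sigma> :: "nat \<Rightarrow> nat"
      show "degree (\<Prod>i\<in>{0..<n}. Ea n k i (\<sigma> i)) \<le> n"
        using prod_deg_from_Lo[of "{}" n "\<lambda>i. Ea n k i (\<sigma> i)"] deg_Ea by simp
    qed
    then show ?thesis unfolding P_def using degree_smult_le[of "inverse cd" "detp n (Ea n k)"] by linarith
  qed
  have A: "case lam1 A B1 B2 of Some l1 \<Rightarrow> [:-l1, 1:] ^ nat \<lceil>m1 A B1 B2 k * real n - cst\<rceil> dvd P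
          | None \<Rightarrow> real (degree P) \<le> (1 - m1 A B1 B2 k) * real n + cst"
  proof -
    have "case lam1 A B1 B2 of Some \<mu> \<Rightarrow> [:-\<mu>, 1:] ^ nat \<lceil>m1 A B1 B2 k * real n - cst\<rceil> dvd detp n (Ea n k)
          | None \<Rightarrow> real (degree (detp n (Ea n k))) \<le> real n - (m1 A B1 B2 k * real n - cst)"
    proof (rule detp_conclude)
      show "degree (Ea n k i j) \<le> 1" for i j by (rule deg_Ea)
      show "m1 A B1 B2 k * real n - cst \<le> real n"
        using mb c0 mult_left_le_one_le[of "real n" "m1 A B1 B2 k"] by simp
      fix \<sigma> :: "nat \<Rightarrow> nat" assume "\<sigma> permutes {0..<n}" "\<forall>i<n. Ea n k i (\<sigma> i) \<noteq> 0"
      then show "\<exists>Lo\<subseteq>{..<n}. m1 A B1 B2 k * real n - cst \<le> real (card Lo) \<and> (\<forall>i\<in>Lo. Gp (lam1 A B1 B2) (Ea n k i (\<sigma> i)))"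
        by (rule per_a[OF k])
    qed
    then show ?thesis unfolding P_def
      using degree_smult_le[of "inverse cd" "detp n (Ea n k)"]
      by (auto split: option.splits simp: dvd_smult algebra_simps)
  qed
  have B: "case lam2 A B1 B2 of Some l2 \<Rightarrow> [:-l2, 1:] ^ nat \<lceil>m2 A B1 B2 k * real n - cst\<rceil> dvd P
          | None \<Rightarrow> real (degree P) \<le> (1 - m2 A B1 B2 k) * real n + cst"
  proof -
    have "case lam2 A B1 B2 of Some \<mu> \<Rightarrow> [:-\<mu>, 1:] ^ nat \<lceil>m2 A B1 B2 k * real n - cst\<rceil> dvd detp n (Eb n k)
          | None \<Rightarrow> real (degree (detp n (Eb n k))) \<le> real n - (m2 A B1 B2 k * real n - cst)"
    proof (rule detp_conclude)
      show "degree (Eb n k i j) \<le> 1" for i j by (rule deg_Eb)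
      show "m2 A B1 B2 k * real n - cst \<le> real n"
        using mb c0 mult_left_le_one_le[of "real n" "m2 A B1 B2 k"] by simp
      fix \<sigma> :: "nat \<Rightarrow> nat" assume "\<sigma> permutes {0..<n}" "\<forall>i<n. Eb n k i (\<sigma> i) \<noteq> 0"
      then show "\<exists>Lo\<subseteq>{..<n}. m2 A B1 B2 k * real n - cst \<le> real (card Lo) \<and> (\<forall>i\<in>Lo. Gp (lam2 A B1 B2) (Eb n k i (\<sigma> i)))"
        by (rule per_b[OF k])
    qed
    then show ?thesis unfolding PB
      using degree_smult_le[of "inverse cd" "detp n (Eb n k)"]
      by (auto split: option.splits simp: dvd_smult algebra_simps)
  qed
  have C: "real (degree (strip_root (lam2 A B1 B2) (strip_root (lam1 A B1 B2) P)))
            \<le> (1 - m1 A B1 B2 k - m2 A B1 B2 k) * real n + 2 * cst"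
  proof (rule C_gen[OF _ c0 mb(1) mb(3) mb(5) A B])
    show "real (degree P) \<le> real n" using degP by simp
    show "False" if "m1 A B1 B2 k > 0" "m2 A B1 B2 k > 0" "lam1 A B1 B2 = None" "lam2 A B1 B2 = None"
      using not_both_None that by blast
    show "False" if "m1 A B1 B2 k > 0" "m2 A B1 B2 k > 0" "lam1 A B1 B2 = Some \<mu>" "lam2 A B1 B2 = Some \<mu>" for \<mu>
      using not_both_same that by blast
  qed
  have H: "Hm n lam k = toeplitz n (\<lambda>z. z powi (- k) * (symb A B1 B2 z - lam))" for lam
    unfolding Hm_def hf_def ..
  show ?thesis
    using polyP A B C H by (intro exI[of _ P]) (simp add: mm_def)
qed

end

theorem proposition2p5:
  fixes A B1 B2 :: "complex poly"
  assumes B1_roots: "\<forall>z. poly B1 z = 0 \<longrightarrow> norm z < 1"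
    and B2_roots: "\<forall>z. poly B2 z = 0 \<longrightarrow> norm z > 1"
    and coprime_roots: "\<forall>z. poly A z = 0 \<longrightarrow> poly (B1 * B2) z \<noteq> 0"
    and q_pos: "qq B1 \<ge> 1"
    and p_pos: "pp A B1 B2 \<ge> 1"
    and gcd1: "Gcd {j::int. fourier_coeff (symb A B1 B2) j \<noteq> 0} = 1"
  shows "\<exists>c::real. c \<ge> 0 \<and>
    (\<forall>k::int. \<forall>n::nat. - int (qq B1) + 1 \<le> k \<and> k \<le> int (pp A B1 B2) - 1 \<and> n \<ge> 1 \<longrightarrow>
      (\<exists>P :: complex poly.
         (\<forall>lam. poly P lam = Determinant.det
                 (toeplitz n (\<lambda>z. z powi (- k) * (symb A B1 B2 z - lam)))) \<and>
         (case lam1 A B1 B2 of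
            Some l1 \<Rightarrow> [:-l1, 1:] ^ nat \<lceil>m1 A B1 B2 k * real n - c\<rceil> dvd P
          | None \<Rightarrow> real (degree P) \<le> (1 - m1 A B1 B2 k) * real n + c) \<and>
         (case lam2 A B1 B2 of
            Some l2 \<Rightarrow> [:-l2, 1:] ^ nat \<lceil>m2 A B1 B2 k * real n - c\<rceil> dvd P
          | None \<Rightarrow> real (degree P) \<le> (1 - m2 A B1 B2 k) * real n + c) \<and>
         real (degree (strip_root (lam2 A B1 B2) (strip_root (lam1 A B1 B2) P)))
            \<le> mm A B1 B2 k * real n + 2 * c))"
proof -
  interpret TS A B1 B2
    using B1_roots B2_roots coprime_roots q_pos p_pos by unfold_locales auto
  show ?thesis
  proof (intro exI[of _ cst] conjI allI impI)
    show "0 \<le> cst" by (rule cst_nonneg)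
    fix k :: int and n :: nat
    assume "- int (qq B1) + 1 \<le> k \<and> k \<le> int (pp A B1 B2) - 1 \<and> 1 \<le> n"
    then have k: "- int (degree B1) + 1 \<le> k" "k \<le> int (pp A B1 B2) - 1" by (auto simp: qq_def)
    show "\<exists>P :: complex poly.
         (\<forall>lam. poly P lam = Determinant.det
                 (toeplitz n (\<lambda>z. z powi (- k) * (symb A B1 B2 z - lam)))) \<and>
         (case lam1 A B1 B2 of
            Some l1 \<Rightarrow> [:-l1, 1:] ^ nat \<lceil>m1 A B1 B2 k * real n - cst\<rceil> dvd P
          | None \<Rightarrow> real (degree P) \<le> (1 - m1 A B1 B2 k) * real n + cst) \<and>
         (case lam2 A B1 B2 of
            Some l2 \<Rightarrow> [:-l2, 1:] ^ nat \<lceil>m2 A B1 B2 k * real n - cst\<rceil> dvd P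
          | None \<Rightarrow> real (degree P) \<le> (1 - m2 A B1 B2 k) * real n + cst) \<and>
         real (degree (strip_root (lam2 A B1 B2) (strip_root (lam1 A B1 B2) P)))
            \<le> mm A B1 B2 k * real n + 2 * cst"
      by (rule main_nk[OF k])
  qed
qed

end
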